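(* Consider $d=1$ and steps bounded by $B$. Let $\hat{\pi}$ be an environment kernel with $\hat\pi(\cdot,1)>0$ $\mathbb{P}$-a.s. and $E_0^{\hat\pi}[t_1]<\infty$, where $t_1:=\inf\{k\ge0:X_k\ge1\}$. Then: (a) for $\mathbb{P}$-a.e. $\omega$ the limit $\phi(\omega):=\lim_{x\to-\infty}E_x^{\hat\pi,\omega}\left[\sum_{k=0}^\infty \mathbf{1}_{X_k=0}\right]$ exists and satisfies $\phi(\omega)>0$; (b) $\phi\in L^1(\mathbb{P})$; (c) the probability measure $\mathbb{Q}$ with $\mathrm{d}\mathbb{Q}=\phi\,\mathrm{d}\mathbb{P}/\|\phi\|_{L^1(\mathbb{P})}$ is $\hat\pi$-invariant, i.e. $\sum_{z\in\mathcal{R}}\phi(T_{-z}\omega)\hat\pi(T_{-z}\omega,z)=\phi(\omega)$ for $\mathbb{P}$-a.e. $\omega$.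
   Context: Let $B\ge1$, $\mathcal{R}:=\{z\in\mathbb{Z}:0<|z|\le B\}$. An environment is $\omega=(\omega_x)_{x\in\mathbb{Z}}$ with $\omega_x=(\pi(x,x+z))_{z\in\mathcal{R}}$ a probability vector; $\Omega$ is the space of environments (product topology, Borel $\sigma$-algebra $\mathcal{B}$), $(T_z\omega)_x=\omega_{x+z}$, and $\mathbb{P}$ is a probability on $\Omega$ stationary and ergodic under shifts. An environment kernel is a function $\hat\pi:\Omega\times\mathcal{R}\to[0,\infty)$ with $\hat\pi(\cdot,z)$ measurable for each $z$ and $\sum_{z\in\mathcal{R}}\hat\pi(\cdot,z)=1$ $\mathbb{P}$-a.s. For $x\in\mathbb{Z}$, $\omega\in\Omega$, $P_x^{\hat\pi,\omega}$ is the law of the Markov chain $(X_n)_{n\ge0}$ with $X_0=x$ and $P(X_{n+1}=y+z\mid X_n=y)=\hat\pi(T_y\omega,z)$; $P_x^{\hat\pi}:=\mathbb{P}\times P_x^{\hat\pi,\omega}$ (the averaged law $\int P_x^{\hat\pi,\omega}(\cdot)\,\mathrm{d}\mathbb{P}(\omega)$), with expectations $E_x^{\hat\pi,\omega}$, $E_x^{\hat\pi}$. *)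

theory Defs
  imports "HOL-Probability.Probability"
begin

type_synonym env = "int \<Rightarrow> int \<Rightarrow> real"
  (* \<omega> x z = \<pi>(x, x+z), the jump probability from site x by z *)

definition steps :: "nat \<Rightarrow> int set" where
  "steps B = {z. 0 < \<bar>z\<bar> \<and> \<bar>z\<bar> \<le> int B}"

definition shift :: "int \<Rightarrow> (int \<Rightarrow> 'a) \<Rightarrow> (int \<Rightarrow> 'a)" where
  "shift z \<omega> = (\<lambda>x. \<omega> (x + z))"

definition env_space :: "env measure" where
  "env_space = PiM UNIV (\<lambda>_. PiM UNIV (\<lambda>_. borel))"

definition is_env :: "nat \<Rightarrow> env \<Rightarrow> bool" where
  "is_env B \<omega> \<longleftrightarrow> (\<forall>x. (\<forall>z\<in>steps B. 0 \<le> \<omega> x z) \<and> (\<Sum>z\<in>steps B. \<omega> x z) = 1)"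

definition stationary_ergodic :: "nat \<Rightarrow> env measure \<Rightarrow> bool" where
  "stationary_ergodic B P \<longleftrightarrow>
     prob_space P \<and> sets P = sets env_space \<and>
     (AE \<omega> in P. is_env B \<omega>) \<and>
     (\<forall>z. distr P P (shift z) = P) \<and>
     (\<forall>A\<in>sets P. (\<forall>z. shift z -` A = A) \<longrightarrow> measure P A = 0 \<or> measure P A = 1)"

definition env_kernel :: "nat \<Rightarrow> env measure \<Rightarrow> (env \<Rightarrow> int \<Rightarrow> real) \<Rightarrow> bool" where
  "env_kernel B P pih \<longleftrightarrow>
     (\<forall>z\<in>steps B. (\<lambda>\<omega>. pih \<omega> z) \<in> borel_measurable P) \<and>
     (\<forall>\<omega>. \<forall>z\<in>steps B. 0 \<le> pih \<omega> z) \<and>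
     (AE \<omega> in P. (\<Sum>z\<in>steps B. pih \<omega> z) = 1)"

text \<open>n-step transition probabilities P_x^{pih,omega}(X_n = y) of the quenched chain.\<close>
fun trans_prob :: "nat \<Rightarrow> (env \<Rightarrow> int \<Rightarrow> real) \<Rightarrow> nat \<Rightarrow> env \<Rightarrow> int \<Rightarrow> int \<Rightarrow> real" where
  "trans_prob B pih 0 \<omega> x y = (if x = y then 1 else 0)"
| "trans_prob B pih (Suc n) \<omega> x y =
     (\<Sum>z\<in>steps B. trans_prob B pih n \<omega> x (y - z) * pih (shift (y - z) \<omega>) z)"

text \<open>stay_prob n omega x = P_x^{pih,omega}(X_0 \<le> 0, ..., X_n \<le> 0).\<close>
fun stay_prob :: "nat \<Rightarrow> (env \<Rightarrow> int \<Rightarrow> real) \<Rightarrow> nat \<Rightarrow> env \<Rightarrow> int \<Rightarrow> real" where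
  "stay_prob B pih 0 \<omega> x = (if x \<le> 0 then 1 else 0)"
| "stay_prob B pih (Suc n) \<omega> x =
     (if x \<le> 0 then (\<Sum>z\<in>steps B. pih (shift x \<omega>) z * stay_prob B pih n \<omega> (x + z)) else 0)"

text \<open>E_x^{pih,omega}[sum_k 1_{X_k = 0}] = sum_k P_x(X_k = 0).\<close>
definition green :: "nat \<Rightarrow> (env \<Rightarrow> int \<Rightarrow> real) \<Rightarrow> env \<Rightarrow> int \<Rightarrow> ennreal" where
  "green B pih \<omega> x = (\<Sum>k. ennreal (trans_prob B pih k \<omega> x 0))"

text \<open>E_0^{pih,omega}[t_1] = sum_n P_0(t_1 > n), t_1 = inf{k \<ge> 0: X_k \<ge> 1}.\<close>
definition expected_t1 :: "nat \<Rightarrow> (env \<Rightarrow> int \<Rightarrow> real) \<Rightarrow> env \<Rightarrow> ennreal" where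
  "expected_t1 B pih \<omega> = (\<Sum>n. ennreal (stay_prob B pih n \<omega> 0))"

end

theory Submission
  imports Defs
begin


fun Pe :: "int set \<Rightarrow> (int \<Rightarrow> int \<Rightarrow> ennreal) \<Rightarrow> nat \<Rightarrow> int \<Rightarrow> int \<Rightarrow> ennreal" where
  "Pe S p 0 x y = (if x = y then 1 else 0)"
| "Pe S p (Suc n) x y = (\<Sum>z\<in>S. Pe S p n x (y - z) * p (y - z) z)"

fun Qe :: "int set \<Rightarrow> (int \<Rightarrow> int \<Rightarrow> ennreal) \<Rightarrow> int \<Rightarrow> nat \<Rightarrow> int \<Rightarrow> int \<Rightarrow> ennreal" where
  "Qe S p M 0 x y = (if x = y \<and> x \<le> M then 1 else 0)"
| "Qe S p M (Suc n) x y = (if x \<le> M then (\<Sum>z\<in>S. p x z * Qe S p M n (x + z) y) else 0)"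

fun Se :: "int set \<Rightarrow> (int \<Rightarrow> int \<Rightarrow> ennreal) \<Rightarrow> int \<Rightarrow> nat \<Rightarrow> int \<Rightarrow> ennreal" where
  "Se S p M 0 x = (if x \<le> M then 1 else 0)"
| "Se S p M (Suc n) x = (if x \<le> M then (\<Sum>z\<in>S. p x z * Se S p M n (x + z)) else 0)"

fun Fe :: "int set \<Rightarrow> (int \<Rightarrow> int \<Rightarrow> ennreal) \<Rightarrow> int \<Rightarrow> nat \<Rightarrow> int \<Rightarrow> int \<Rightarrow> ennreal" where
  "Fe S p c 0 x w = (if x = w \<and> c \<le> x then 1 else 0)"
| "Fe S p c (Suc k) x w = (if x < c then (\<Sum>z\<in>S. p x z * Fe S p c k (x + z) w) else 0)"

definition Ge :: "int set \<Rightarrow> (int \<Rightarrow> int \<Rightarrow> ennreal) \<Rightarrow> int \<Rightarrow> int \<Rightarrow> ennreal" where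
  "Ge S p x y = (\<Sum>n. Pe S p n x y)"

definition hq :: "int set \<Rightarrow> (int \<Rightarrow> int \<Rightarrow> ennreal) \<Rightarrow> int \<Rightarrow> int \<Rightarrow> ennreal" where
  "hq S p M x = (\<Sum>n. Qe S p M n x 0)"

definition hh :: "int set \<Rightarrow> (int \<Rightarrow> int \<Rightarrow> ennreal) \<Rightarrow> int \<Rightarrow> ennreal" where
  "hh S p m = hq S p m m"

definition Tt :: "int set \<Rightarrow> (int \<Rightarrow> int \<Rightarrow> ennreal) \<Rightarrow> int \<Rightarrow> ennreal" where
  "Tt S p M = (\<Sum>j. hh S p (M + 1 + int j))"

definition Htot :: "int set \<Rightarrow> (int \<Rightarrow> int \<Rightarrow> ennreal) \<Rightarrow> ennreal" where
  "Htot S p = (\<Sum>j. hh S p (int j))"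

definition sig :: "int set \<Rightarrow> (int \<Rightarrow> int \<Rightarrow> ennreal) \<Rightarrow> int \<Rightarrow> ennreal" where
  "sig S p m = (\<Sum>n. Se S p m n m)"

definition Ee :: "int set \<Rightarrow> (int \<Rightarrow> int \<Rightarrow> ennreal) \<Rightarrow> int \<Rightarrow> int \<Rightarrow> int \<Rightarrow> ennreal" where
  "Ee S p c x w = (\<Sum>k. Fe S p c k x w)"

lemma suminf_split_ennreal: "suminf f = (\<Sum>j. f (j + i)) + (\<Sum>j<i. f j)" for f :: "nat \<Rightarrow> ennreal"
  by (rule suminf_offset) auto

lemma suminf_head_ennreal: "(\<Sum>n. f n) = f 0 + (\<Sum>n. f (Suc n))" for f :: "nat \<Rightarrow> ennreal"
  using suminf_split_ennreal[of f 1] by (simp add: add.commute)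

lemma suminf_sum_ennreal: "(\<Sum>n. \<Sum>i\<in>I. f i n) = (\<Sum>i\<in>I. \<Sum>n. f i n)" for f :: "'a \<Rightarrow> nat \<Rightarrow> ennreal"
  by (rule suminf_sum) auto

lemma suminf_multc_ennreal: "(\<Sum>n. f n * c) = (\<Sum>n. f n) * (c::ennreal)"
  using ennreal_suminf_cmult[of c f] by (simp add: mult.commute)

lemma ennreal_suminf_tendsto0:
  fixes f :: "nat \<Rightarrow> ennreal"
  assumes f: "suminf f \<noteq> \<infinity>"
  shows "f \<longlonglongrightarrow> 0"
proof -
  have fin: "f n \<noteq> \<infinity>" for n
  proof -
    have "sum f {n} \<le> suminf f" by (rule sum_le_suminf) auto
    then show ?thesis using f by (auto simp: top_unique)
  qed
  define r where "r n = enn2real (f n)" for n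
  have fr: "f n = ennreal (r n)" for n using fin by (simp add: r_def ennreal_enn2real_if)
  have "(\<Sum>i. ennreal (r i)) \<noteq> top" using f fr by (metis infinity_ennreal_def suminf_cong)
  then have "summable r" by (intro summable_suminf_not_top) (auto simp: r_def)
  then have "r \<longlonglongrightarrow> 0" by (rule summable_LIMSEQ_zero)
  then have "(\<lambda>n. ennreal (r n)) \<longlonglongrightarrow> ennreal 0" by (rule tendsto_ennrealI)
  then show ?thesis by (simp add: fr[abs_def])
qed

locale kern =
  fixes S :: "int set" and p :: "int \<Rightarrow> int \<Rightarrow> ennreal"
  assumes finS: "finite S" and sum1: "\<And>x. (\<Sum>z\<in>S. p x z) = 1"
begin

lemma Pe_first: "Pe S p (Suc n) x y = (\<Sum>z\<in>S. p x z * Pe S p n (x + z) y)"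
proof (induction n arbitrary: y)
  case 0
  show ?case by (auto intro!: sum.cong simp: mult.commute)
next
  case (Suc n)
  have "Pe S p (Suc (Suc n)) x y = (\<Sum>z'\<in>S. (\<Sum>z\<in>S. p x z * Pe S p n (x + z) (y - z')) * p (y - z') z')"
    using Suc by simp
  also have "\<dots> = (\<Sum>z\<in>S. p x z * (\<Sum>z'\<in>S. Pe S p n (x + z) (y - z') * p (y - z') z'))"
    by (simp add: sum_distrib_left sum_distrib_right mult.assoc) (rule sum.swap)
  also have "\<dots> = (\<Sum>z\<in>S. p x z * Pe S p (Suc n) (x + z) y)" by simp
  finally show ?case .
qed

lemma Ge_first: "Ge S p x y = (if x = y then 1 else 0) + (\<Sum>z\<in>S. p x z * Ge S p (x + z) y)"
proof -
  have "Ge S p x y = Pe S p 0 x y + (\<Sum>n. Pe S p (Suc n) x y)"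
    unfolding Ge_def by (rule suminf_head_ennreal)
  also have "(\<Sum>n. Pe S p (Suc n) x y) = (\<Sum>z\<in>S. p x z * Ge S p (x + z) y)"
    by (simp only: Pe_first suminf_sum_ennreal Ge_def ennreal_suminf_cmult)
  finally show ?thesis by simp
qed

lemma Ge_last: "Ge S p x y = (if x = y then 1 else 0) + (\<Sum>z\<in>S. Ge S p x (y - z) * p (y - z) z)"
proof -
  have "Ge S p x y = Pe S p 0 x y + (\<Sum>n. Pe S p (Suc n) x y)"
    unfolding Ge_def by (rule suminf_head_ennreal)
  also have "(\<Sum>n. Pe S p (Suc n) x y) = (\<Sum>z\<in>S. Ge S p x (y - z) * p (y - z) z)"
    by (simp add: suminf_sum_ennreal Ge_def suminf_multc_ennreal)
  finally show ?thesis by simp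
qed

lemma Qe_above: "M < x \<Longrightarrow> Qe S p M n x y = 0"
  by (cases n) auto

lemma Qe_target: "M < y \<Longrightarrow> Qe S p M n x y = 0"
  by (induction n arbitrary: x) auto

lemma hq_above: "M < x \<Longrightarrow> hq S p M x = 0"
  by (simp add: hq_def Qe_above)

lemma hq_first: "x \<le> M \<Longrightarrow> hq S p M x = (if x = 0 then 1 else 0) + (\<Sum>z\<in>S. p x z * hq S p M (x + z))"
proof -
  assume xM: "x \<le> M"
  have "hq S p M x = Qe S p M 0 x 0 + (\<Sum>n. Qe S p M (Suc n) x 0)"
    unfolding hq_def by (rule suminf_head_ennreal)
  also have "(\<Sum>n. Qe S p M (Suc n) x 0) = (\<Sum>z\<in>S. p x z * hq S p M (x + z))"
    using xM by (simp only: Qe.simps if_True suminf_sum_ennreal hq_def ennreal_suminf_cmult)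
  finally show ?thesis using xM by simp
qed

lemma hh_neg: "m < 0 \<Longrightarrow> hh S p m = 0"
  by (simp add: hh_def hq_def Qe_target)

lemma Tt_split: "Tt S p M = hh S p (M + 1) + Tt S p (M + 1)"
proof -
  have "Tt S p M = hh S p (M + 1 + int 0) + (\<Sum>j. hh S p (M + 1 + int (Suc j)))"
    unfolding Tt_def by (rule suminf_head_ennreal)
  also have "(\<Sum>j. hh S p (M + 1 + int (Suc j))) = Tt S p (M + 1)"
    unfolding Tt_def by (simp add: algebra_simps)
  finally show ?thesis by simp
qed

lemma Tt_mono_aux: "hh S p (M + 1 + int d) + Tt S p (M + 1 + int d) \<le> Tt S p M"
proof (induction d arbitrary: M)
  case 0
  then show ?case using Tt_split[of M] by simp
next
  case (Suc d)
  have "hh S p (M + 1 + int (Suc d)) + Tt S p (M + 1 + int (Suc d))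
      = hh S p ((M + 1) + 1 + int d) + Tt S p ((M + 1) + 1 + int d)" by (simp add: algebra_simps)
  also have "\<dots> \<le> Tt S p (M + 1)" by (rule Suc.IH)
  also have "\<dots> \<le> Tt S p M" using Tt_split[of M] by simp
  finally show ?case .
qed

lemma Tt_mono: "M < y \<Longrightarrow> hh S p y + Tt S p y \<le> Tt S p M"
  using Tt_mono_aux[of M "nat (y - M - 1)"] by simp

lemma Gtrunc_bound: "y \<le> M \<Longrightarrow> (\<Sum>n<N. Pe S p n y 0) \<le> hq S p M y + Tt S p M"
proof (induction N arbitrary: M y)
  case 0
  then show ?case by simp
next
  case (Suc N)
  have b: "(\<Sum>n<N. Pe S p n (y + z) 0) \<le> hq S p M (y + z) + Tt S p M" for z
  proof (cases "y + z \<le> M")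
    case True
    then show ?thesis by (rule Suc.IH)
  next
    case False
    have "(\<Sum>n<N. Pe S p n (y + z) 0) \<le> hq S p (y + z) (y + z) + Tt S p (y + z)"
      by (rule Suc.IH) simp
    also have "\<dots> \<le> Tt S p M" using Tt_mono[of M "y + z"] False by (simp add: hh_def)
    also have "\<dots> \<le> hq S p M (y + z) + Tt S p M" by simp
    finally show ?thesis .
  qed
  have "(\<Sum>n<Suc N. Pe S p n y 0) = Pe S p 0 y 0 + (\<Sum>n<N. Pe S p (Suc n) y 0)"
    by (rule sum.lessThan_Suc_shift)
  also have "(\<Sum>n<N. Pe S p (Suc n) y 0) = (\<Sum>z\<in>S. p y z * (\<Sum>n<N. Pe S p n (y + z) 0))"
    by (simp only: Pe_first sum_distrib_left) (rule sum.swap)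
  also have "\<dots> \<le> (\<Sum>z\<in>S. p y z * (hq S p M (y + z) + Tt S p M))"
    by (intro sum_mono mult_left_mono b) auto
  also have "\<dots> = (\<Sum>z\<in>S. p y z * hq S p M (y + z)) + (\<Sum>z\<in>S. p y z) * Tt S p M"
    by (simp add: distrib_left sum.distrib sum_distrib_right)
  finally have "(\<Sum>n<Suc N. Pe S p n y 0) \<le> Pe S p 0 y 0 + ((\<Sum>z\<in>S. p y z * hq S p M (y + z)) + Tt S p M)"
    by (simp add: sum1 add_left_mono)
  also have "\<dots> = hq S p M y + Tt S p M"
    using hq_first[OF Suc.prems] by (simp add: add.assoc)
  finally show ?case .
qed

lemma Ge_le_shiftsum: "Ge S p y 0 \<le> (\<Sum>j. hh S p (y + int j))"
proof -
  have "Ge S p y 0 \<le> hq S p y y + Tt S p y"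
    unfolding Ge_def by (rule suminf_le_const) (auto intro: Gtrunc_bound)
  also have "\<dots> = (\<Sum>j. hh S p (y + int j))"
    using suminf_head_ennreal[of "\<lambda>j. hh S p (y + int j)"]
    by (simp add: Tt_def hh_def algebra_simps)
  finally show ?thesis .
qed

lemma Ge_le_Htot: "Ge S p y 0 \<le> Htot S p"
proof -
  have "(\<Sum>j. hh S p (y + int j)) \<le> Htot S p"
  proof (cases "y \<ge> 0")
    case True
    have "Htot S p = (\<Sum>j. hh S p (int (j + nat y))) + (\<Sum>j<nat y. hh S p (int j))"
      unfolding Htot_def by (rule suminf_split_ennreal)
    moreover have "(\<Sum>j. hh S p (int (j + nat y))) = (\<Sum>j. hh S p (y + int j))"
      using True by (simp add: algebra_simps)
    ultimately show ?thesis by simp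
  next
    case False
    have "(\<Sum>j. hh S p (y + int j)) = (\<Sum>j. hh S p (y + int (j + nat (-y)))) + (\<Sum>j<nat (-y). hh S p (y + int j))"
      by (rule suminf_split_ennreal)
    moreover have "(\<Sum>j<nat (-y). hh S p (y + int j)) = 0"
      by (intro sum.neutral) (auto intro!: hh_neg)
    moreover have "(\<Sum>j. hh S p (y + int (j + nat (-y)))) = Htot S p"
      using False by (simp add: Htot_def algebra_simps)
    ultimately show ?thesis by simp
  qed
  then show ?thesis using Ge_le_shiftsum order_trans by blast
qed

lemma Se_above: "M < x \<Longrightarrow> Se S p M n x = 0"
  by (cases n) auto

lemma Ssum_first: "y \<le> M \<Longrightarrow> (\<Sum>n. Se S p M n y) = 1 + (\<Sum>z\<in>S. p y z * (\<Sum>n. Se S p M n (y + z)))"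
proof -
  assume yM: "y \<le> M"
  have "(\<Sum>n. Se S p M n y) = Se S p M 0 y + (\<Sum>n. Se S p M (Suc n) y)"
    by (rule suminf_head_ennreal)
  also have "(\<Sum>n. Se S p M (Suc n) y) = (\<Sum>z\<in>S. p y z * (\<Sum>n. Se S p M n (y + z)))"
    using yM by (simp only: Se.simps if_True suminf_sum_ennreal ennreal_suminf_cmult)
  finally show ?thesis using yM by simp
qed

definition TS :: "int \<Rightarrow> int \<Rightarrow> ennreal" where
  "TS c M = (\<Sum>m\<in>{M<..<c}. sig S p m)"

lemma TS_mono: "M < y \<Longrightarrow> y < c \<Longrightarrow> sig S p y + TS c y \<le> TS c M"
proof -
  assume a: "M < y" "y < c"
  have "sig S p y + TS c y = (\<Sum>m\<in>insert y {y<..<c}. sig S p m)"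
    unfolding TS_def by (subst sum.insert) auto
  also have "\<dots> \<le> TS c M"
    unfolding TS_def using a by (intro sum_mono2) auto
  finally show ?thesis .
qed

lemma Strunc_bound: "M < c \<Longrightarrow> y \<le> M \<Longrightarrow> (\<Sum>n<N. Se S p (c - 1) n y) \<le> (\<Sum>n. Se S p M n y) + TS c M"
proof (induction N arbitrary: M y)
  case 0
  then show ?case by simp
next
  case (Suc N)
  have b: "(\<Sum>n<N. Se S p (c - 1) n (y + z)) \<le> (\<Sum>n. Se S p M n (y + z)) + TS c M" for z
  proof (cases "y + z \<le> M")
    case True
    then show ?thesis using Suc.prems by (intro Suc.IH) auto
  next
    case False
    show ?thesis
    proof (cases "y + z < c")
      case True
      have "(\<Sum>n<N. Se S p (c - 1) n (y + z)) \<le> (\<Sum>n. Se S p (y + z) n (y + z)) + TS c (y + z)"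
        using True by (intro Suc.IH) auto
      also have "\<dots> \<le> TS c M" using TS_mono[of M "y + z" c] False True by (simp add: sig_def)
      also have "\<dots> \<le> (\<Sum>n. Se S p M n (y + z)) + TS c M" by simp
      finally show ?thesis .
    next
      case False
      then show ?thesis by (simp add: Se_above)
    qed
  qed
  have "(\<Sum>n<Suc N. Se S p (c - 1) n y) = Se S p (c - 1) 0 y + (\<Sum>n<N. Se S p (c - 1) (Suc n) y)"
    by (rule sum.lessThan_Suc_shift)
  also have "(\<Sum>n<N. Se S p (c - 1) (Suc n) y) = (\<Sum>z\<in>S. p y z * (\<Sum>n<N. Se S p (c - 1) n (y + z)))"
    using Suc.prems by (simp only: Se.simps sum_distrib_left) (simp, rule sum.swap)
  also have "\<dots> \<le> (\<Sum>z\<in>S. p y z * ((\<Sum>n. Se S p M n (y + z)) + TS c M))"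
    by (intro sum_mono mult_left_mono b) auto
  also have "\<dots> = (\<Sum>z\<in>S. p y z * (\<Sum>n. Se S p M n (y + z))) + (\<Sum>z\<in>S. p y z) * TS c M"
    by (simp add: distrib_left sum.distrib sum_distrib_right)
  finally have "(\<Sum>n<Suc N. Se S p (c - 1) n y) \<le> Se S p (c - 1) 0 y + ((\<Sum>z\<in>S. p y z * (\<Sum>n. Se S p M n (y + z))) + TS c M)"
    by (simp add: sum1 add_left_mono)
  also have "\<dots> = (\<Sum>n. Se S p M n y) + TS c M"
    using Ssum_first[OF Suc.prems(2)] Suc.prems by (simp add: add.assoc)
  finally show ?case .
qed

lemma Ssum_bound: "y < c \<Longrightarrow> (\<Sum>n. Se S p (c - 1) n y) \<le> sig S p y + TS c y"
  unfolding sig_def by (rule suminf_le_const) (auto intro: Strunc_bound)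

lemma Se_tendsto0:
  assumes fin: "\<And>m. sig S p m < \<infinity>" and yc: "y < c"
  shows "(\<lambda>n. Se S p (c - 1) n y) \<longlonglongrightarrow> 0"
proof -
  have "sig S p y + TS c y < \<infinity>" using fin unfolding TS_def by simp
  then have f: "(\<Sum>n. Se S p (c - 1) n y) \<noteq> \<infinity>" using Ssum_bound[OF yc] by (auto simp: top_unique)
  then show ?thesis by (rule ennreal_suminf_tendsto0)
qed


lemma Fe_geq: "c \<le> x \<Longrightarrow> Fe S p c k x w = (if k = 0 \<and> x = w then 1 else 0)"
  by (cases k) auto

lemma Ee_geq: "c \<le> x \<Longrightarrow> Ee S p c x w = (if x = w then 1 else 0)"
proof -
  assume cx: "c \<le> x"
  have "Ee S p c x w = Fe S p c 0 x w + (\<Sum>k. Fe S p c (Suc k) x w)"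
    unfolding Ee_def by (rule suminf_head_ennreal)
  then show ?thesis using cx by (simp add: Fe_geq)
qed

lemma Ee_first: "x < c \<Longrightarrow> Ee S p c x w = (\<Sum>z\<in>S. p x z * Ee S p c (x + z) w)"
proof -
  assume xc: "x < c"
  have "Ee S p c x w = Fe S p c 0 x w + (\<Sum>k. Fe S p c (Suc k) x w)"
    unfolding Ee_def by (rule suminf_head_ennreal)
  also have "(\<Sum>k. Fe S p c (Suc k) x w) = (\<Sum>z\<in>S. p x z * Ee S p c (x + z) w)"
    using xc by (simp only: Fe.simps if_True suminf_sum_ennreal ennreal_suminf_cmult Ee_def)
  finally show ?thesis using xc by simp
qed

end

locale kernB = kern +
  fixes B :: nat
  assumes Sbd: "\<And>z. z \<in> S \<Longrightarrow> z \<le> int B" and one_S: "1 \<in> S"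
begin

definition W :: "int \<Rightarrow> int set" where "W c = {c..c + int B - 1}"

lemma finW: "finite (W c)" by (simp add: W_def)

lemma mass_trunc: "x \<le> c + int B - 1 \<Longrightarrow>
   (\<Sum>k<Suc n. \<Sum>w\<in>W c. Fe S p c k x w) + Se S p (c - 1) n x = 1"
proof (induction n arbitrary: x)
  case 0
  then show ?case by (cases "c \<le> x") (auto simp: W_def)
next
  case (Suc n)
  show ?case
  proof (cases "c \<le> x")
    case True
    then have "(\<Sum>k<Suc (Suc n). \<Sum>w\<in>W c. Fe S p c k x w) = (\<Sum>k<Suc (Suc n). if k = 0 then 1 else 0)"
      using Suc.prems by (intro sum.cong refl) (auto simp: Fe_geq W_def)
    also have "\<dots> = 1" by (simp add: sum.delta)
    finally show ?thesis using True by simp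
  next
    case False
    have "(\<Sum>k<Suc (Suc n). \<Sum>w\<in>W c. Fe S p c k x w) = (\<Sum>w\<in>W c. Fe S p c 0 x w) + (\<Sum>k<Suc n. \<Sum>w\<in>W c. Fe S p c (Suc k) x w)"
      by (rule sum.lessThan_Suc_shift)
    also have "(\<Sum>w\<in>W c. Fe S p c 0 x w) = 0" using False by simp
    also have "(\<Sum>k<Suc n. \<Sum>w\<in>W c. Fe S p c (Suc k) x w) = (\<Sum>z\<in>S. p x z * (\<Sum>k<Suc n. \<Sum>w\<in>W c. Fe S p c k (x + z) w))"
    proof -
      have "(\<Sum>k<Suc n. \<Sum>w\<in>W c. Fe S p c (Suc k) x w) = (\<Sum>k<Suc n. \<Sum>w\<in>W c. \<Sum>z\<in>S. p x z * Fe S p c k (x + z) w)"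
        using False by simp
      also have "\<dots> = (\<Sum>k<Suc n. \<Sum>z\<in>S. \<Sum>w\<in>W c. p x z * Fe S p c k (x + z) w)"
        by (rule sum.cong[OF refl], rule sum.swap)
      also have "\<dots> = (\<Sum>z\<in>S. \<Sum>k<Suc n. \<Sum>w\<in>W c. p x z * Fe S p c k (x + z) w)"
        by (rule sum.swap)
      finally show ?thesis by (simp only: sum_distrib_left)
    qed
    finally have e1: "(\<Sum>k<Suc (Suc n). \<Sum>w\<in>W c. Fe S p c k x w) = (\<Sum>z\<in>S. p x z * (\<Sum>k<Suc n. \<Sum>w\<in>W c. Fe S p c k (x + z) w))"
      by simp
    have e2: "Se S p (c - 1) (Suc n) x = (\<Sum>z\<in>S. p x z * Se S p (c - 1) n (x + z))" using False by simp
    have "(\<Sum>k<Suc (Suc n). \<Sum>w\<in>W c. Fe S p c k x w) + Se S p (c - 1) (Suc n) x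
        = (\<Sum>z\<in>S. p x z * ((\<Sum>k<Suc n. \<Sum>w\<in>W c. Fe S p c k (x + z) w) + Se S p (c - 1) n (x + z)))"
      unfolding e1 e2 by (simp add: distrib_left sum.distrib)
    also have "\<dots> = (\<Sum>z\<in>S. p x z * 1)"
    proof (rule sum.cong[OF refl])
      fix z assume "z \<in> S"
      then have "z \<le> int B" by (rule Sbd)
      then show "p x z * ((\<Sum>k<Suc n. \<Sum>w\<in>W c. Fe S p c k (x + z) w) + Se S p (c - 1) n (x + z)) = p x z * 1"
        using False by (subst Suc.IH) auto
    qed
    finally show ?thesis by (simp add: sum1)
  qed
qed


lemma mass1:
  assumes fin: "\<And>m. sig S p m < \<infinity>" and x: "x \<le> c + int B - 1"
  shows "(\<Sum>w\<in>W c. Ee S p c x w) = 1"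
proof (cases "c \<le> x")
  case True
  then show ?thesis using x by (simp add: Ee_geq W_def)
next
  case False
  define g where "g k = (\<Sum>w\<in>W c. Fe S p c k x w)" for k
  have eq: "(\<Sum>w\<in>W c. Ee S p c x w) = suminf g"
    unfolding Ee_def g_def by (rule suminf_sum_ennreal[symmetric])
  have mt: "(\<Sum>k<Suc n. g k) + Se S p (c - 1) n x = 1" for n
    unfolding g_def by (rule mass_trunc[OF x])
  have "suminf g \<le> 1"
  proof (rule suminf_le_const)
    fix n
    have "(\<Sum>k<n. g k) \<le> (\<Sum>k<Suc n. g k)" by (intro sum_mono2) auto
    also have "\<dots> \<le> (\<Sum>k<Suc n. g k) + Se S p (c - 1) n x" by simp
    finally show "sum g {..<n} \<le> 1" using mt[of n] by (simp only:)
  qed simp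
  moreover have "1 \<le> suminf g"
  proof -
    have "(\<lambda>n. suminf g + Se S p (c - 1) n x) \<longlonglongrightarrow> suminf g + 0"
      using Se_tendsto0[OF fin] False by (intro tendsto_add tendsto_const) auto
    moreover have "1 \<le> suminf g + Se S p (c - 1) n x" for n
    proof -
      have "(\<Sum>k<Suc n. g k) \<le> suminf g" by (rule sum_le_suminf) auto
      then show ?thesis using mt[of n] by (metis add_right_mono)
    qed
    ultimately show ?thesis by (intro LIMSEQ_le_const) auto
  qed
  ultimately show ?thesis using eq by simp
qed

lemma repr_ge:
  assumes c0: "c \<le> 0"
  shows "x \<le> c + int B - 1 \<Longrightarrow> (\<Sum>w\<in>W c. (\<Sum>k<K. Fe S p c k x w) * Ge S p w 0) \<le> Ge S p x 0"
proof (induction K arbitrary: x)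
  case 0
  then show ?case by simp
next
  case (Suc K)
  show ?case
  proof (cases "c \<le> x")
    case True
    have "(\<Sum>w\<in>W c. (\<Sum>k<Suc K. Fe S p c k x w) * Ge S p w 0) = (\<Sum>w\<in>W c. (if x = w then Ge S p w 0 else 0))"
    proof (rule sum.cong[OF refl])
      fix w assume "w \<in> W c"
      have "(\<Sum>k<Suc K. Fe S p c k x w) = (\<Sum>k<Suc K. if k = 0 then (if x = w then 1 else 0) else 0)"
        using True by (intro sum.cong refl) (auto simp: Fe_geq)
      also have "\<dots> = (if x = w then 1 else 0)" by (simp add: sum.delta)
      finally show "(\<Sum>k<Suc K. Fe S p c k x w) * Ge S p w 0 = (if x = w then Ge S p w 0 else 0)" by simp
    qed
    also have "\<dots> = Ge S p x 0" using True Suc.prems by (simp add: sum.delta finW W_def)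
    finally show ?thesis by simp
  next
    case False
    have "(\<Sum>w\<in>W c. (\<Sum>k<Suc K. Fe S p c k x w) * Ge S p w 0)
        = (\<Sum>w\<in>W c. (\<Sum>z\<in>S. p x z * (\<Sum>k<K. Fe S p c k (x + z) w)) * Ge S p w 0)"
    proof (rule sum.cong[OF refl])
      fix w
      have "(\<Sum>k<Suc K. Fe S p c k x w) = Fe S p c 0 x w + (\<Sum>k<K. Fe S p c (Suc k) x w)"
        by (rule sum.lessThan_Suc_shift)
      also have "\<dots> = (\<Sum>z\<in>S. p x z * (\<Sum>k<K. Fe S p c k (x + z) w))"
        using False by (simp add: sum_distrib_left) (rule sum.swap)
      finally show "(\<Sum>k<Suc K. Fe S p c k x w) * Ge S p w 0 = (\<Sum>z\<in>S. p x z * (\<Sum>k<K. Fe S p c k (x + z) w)) * Ge S p w 0"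
        by simp
    qed
    also have "\<dots> = (\<Sum>z\<in>S. p x z * (\<Sum>w\<in>W c. (\<Sum>k<K. Fe S p c k (x + z) w) * Ge S p w 0))"
      by (simp add: sum_distrib_left sum_distrib_right mult.assoc) (rule sum.swap)
    also have "\<dots> \<le> (\<Sum>z\<in>S. p x z * Ge S p (x + z) 0)"
    proof (intro sum_mono mult_left_mono)
      fix z assume "z \<in> S"
      then have "z \<le> int B" by (rule Sbd)
      then show "(\<Sum>w\<in>W c. (\<Sum>k<K. Fe S p c k (x + z) w) * Ge S p w 0) \<le> Ge S p (x + z) 0"
        using False by (intro Suc.IH) auto
    qed auto
    also have "\<dots> \<le> Ge S p x 0" by (subst (2) Ge_first) simp
    finally show ?thesis .
  qed
qed

lemma repr_le:
  assumes c0: "c \<le> 0"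
  shows "x \<le> c + int B - 1 \<Longrightarrow> (\<Sum>n<N. Pe S p n x 0) \<le> (\<Sum>w\<in>W c. Ee S p c x w * Ge S p w 0)"
proof (induction N arbitrary: x)
  case 0
  then show ?case by simp
next
  case (Suc N)
  show ?case
  proof (cases "c \<le> x")
    case True
    have "(\<Sum>w\<in>W c. Ee S p c x w * Ge S p w 0) = (\<Sum>w\<in>W c. (if x = w then Ge S p w 0 else 0))"
      using True by (intro sum.cong refl) (simp add: Ee_geq)
    also have "\<dots> = Ge S p x 0" using True Suc.prems by (simp add: sum.delta finW W_def)
    finally have e: "(\<Sum>w\<in>W c. Ee S p c x w * Ge S p w 0) = Ge S p x 0" .
    have "(\<Sum>n<Suc N. Pe S p n x 0) \<le> Ge S p x 0"
      unfolding Ge_def by (rule sum_le_suminf) auto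
    then show ?thesis using e by simp
  next
    case False
    have "(\<Sum>n<Suc N. Pe S p n x 0) = Pe S p 0 x 0 + (\<Sum>n<N. Pe S p (Suc n) x 0)"
      by (rule sum.lessThan_Suc_shift)
    also have "Pe S p 0 x 0 = 0" using False c0 by simp
    also have "(\<Sum>n<N. Pe S p (Suc n) x 0) = (\<Sum>z\<in>S. p x z * (\<Sum>n<N. Pe S p n (x + z) 0))"
      by (simp only: Pe_first sum_distrib_left) (rule sum.swap)
    also have "\<dots> \<le> (\<Sum>z\<in>S. p x z * (\<Sum>w\<in>W c. Ee S p c (x + z) w * Ge S p w 0))"
    proof (intro sum_mono mult_left_mono)
      fix z assume "z \<in> S"
      then have "z \<le> int B" by (rule Sbd)
      then show "(\<Sum>n<N. Pe S p n (x + z) 0) \<le> (\<Sum>w\<in>W c. Ee S p c (x + z) w * Ge S p w 0)"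
        using False by (intro Suc.IH) auto
    qed auto
    also have "\<dots> = (\<Sum>w\<in>W c. (\<Sum>z\<in>S. p x z * Ee S p c (x + z) w) * Ge S p w 0)"
      by (simp add: sum_distrib_left sum_distrib_right mult.assoc) (rule sum.swap)
    also have "\<dots> = (\<Sum>w\<in>W c. Ee S p c x w * Ge S p w 0)"
      using False by (simp add: Ee_first)
    finally show ?thesis by simp
  qed
qed

lemma repr:
  assumes c0: "c \<le> 0" and x: "x \<le> c + int B - 1"
  shows "Ge S p x 0 = (\<Sum>w\<in>W c. Ee S p c x w * Ge S p w 0)"
proof (rule antisym)
  show "Ge S p x 0 \<le> (\<Sum>w\<in>W c. Ee S p c x w * Ge S p w 0)"
    using repr_le[OF c0 x] unfolding Ge_def[of S p x 0] by (intro suminf_le_const) auto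
  have "(\<Sum>w\<in>W c. Ee S p c x w * Ge S p w 0) = (\<Sum>k. \<Sum>w\<in>W c. Fe S p c k x w * Ge S p w 0)"
    unfolding Ee_def by (simp add: suminf_multc_ennreal suminf_sum_ennreal)
  also have "\<dots> \<le> Ge S p x 0"
  proof (rule suminf_le_const)
    fix K
    have "(\<Sum>k<K. \<Sum>w\<in>W c. Fe S p c k x w * Ge S p w 0) = (\<Sum>w\<in>W c. (\<Sum>k<K. Fe S p c k x w) * Ge S p w 0)"
      by (simp add: sum_distrib_right) (rule sum.swap)
    also have "\<dots> \<le> Ge S p x 0" by (rule repr_ge[OF c0 x])
    finally show "(\<Sum>k<K. \<Sum>w\<in>W c. Fe S p c k x w * Ge S p w 0) \<le> Ge S p x 0" .
  qed simp
  finally show "(\<Sum>w\<in>W c. Ee S p c x w * Ge S p w 0) \<le> Ge S p x 0" .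
qed

end


context kernB begin

lemma p_le1: "z \<in> S \<Longrightarrow> p x z \<le> 1"
  using member_le_sum[of z S "p x"] finS sum1[of x] by simp

lemma Ee_lower: "Ee S p c (c - int d) c \<ge> (\<Prod>i\<in>{1..d}. p (c - int i) 1)"
proof (induction d)
  case 0
  then show ?case by (simp add: Ee_geq)
next
  case (Suc d)
  define x where "x = c - int (Suc d)"
  have xe: "x + 1 = c - int d" by (simp add: x_def)
  have "Ee S p c x c = (\<Sum>z\<in>S. p x z * Ee S p c (x + z) c)"
    by (rule Ee_first) (simp add: x_def)
  moreover have "p x 1 * Ee S p c (x + 1) c \<le> (\<Sum>z\<in>S. p x z * Ee S p c (x + z) c)"
    by (rule member_le_sum[of 1 S "\<lambda>z. p x z * Ee S p c (x + z) c"])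
       (auto simp: one_S finS)
  ultimately have A: "p x 1 * Ee S p c (c - int d) c \<le> Ee S p c x c" unfolding xe by simp
  have B: "p x 1 * (\<Prod>i\<in>{1..d}. p (c - int i) 1) \<le> p x 1 * Ee S p c (c - int d) c"
    by (rule mult_left_mono[OF Suc.IH]) simp
  have C: "(\<Prod>i\<in>{1..Suc d}. p (c - int i) 1) = p x 1 * (\<Prod>i\<in>{1..d}. p (c - int i) 1)"
    by (simp add: prod.nat_ivl_Suc' mult.commute x_def)
  show ?case using order_trans[OF B A] C by (simp add: x_def)
qed


lemma prod_le_prefix: "d \<le> B \<Longrightarrow> (\<Prod>i\<in>{1..B}. p (c - int i) 1) \<le> (\<Prod>i\<in>{1..d}. p (c - int i) 1)"
proof -
  assume d: "d \<le> B"
  have "(\<Prod>i\<in>{1..B}. p (c - int i) 1) = (\<Prod>i\<in>{1..d}. p (c - int i) 1) * (\<Prod>i\<in>{1..B} - {1..d}. p (c - int i) 1)"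
    using d by (subst prod.subset_diff[of "{1..d}"]) (auto simp: mult.commute)
  also have "(\<Prod>i\<in>{1..B} - {1..d}. p (c - int i) 1) \<le> (\<Prod>i\<in>{1..B} - {1..d}. 1)"
    by (intro prod_mono_ennreal) (auto simp: p_le1 one_S)
  finally show ?thesis by (simp add: mult_left_mono)
qed

lemma prod_le_1: "(\<Prod>i\<in>{1..B}. p (c - int i) 1) \<le> 1"
  using prod_le_prefix[of 0 c] by simp

lemma Ee_lower_B: "x < c \<Longrightarrow> c - int B \<le> x \<Longrightarrow> Ee S p c x c \<ge> (\<Prod>i\<in>{1..B}. p (c - int i) 1)"
proof -
  assume a: "x < c" "c - int B \<le> x"
  have "(\<Prod>i\<in>{1..B}. p (c - int i) 1) \<le> (\<Prod>i\<in>{1..nat (c - x)}. p (c - int i) 1)"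
    using a by (intro prod_le_prefix) auto
  also have "\<dots> \<le> Ee S p c (c - int (nat (c - x))) c" by (rule Ee_lower)
  finally show ?thesis using a by simp
qed

end

locale kernG = kernB +
  fixes \<epsilon> :: real
  assumes Bpos: "1 \<le> B" and pos1: "\<And>x. 0 < p x 1"
    and sigfin: "\<And>m. sig S p m < \<infinity>" and Hfin: "Htot S p < \<infinity>"
    and epos: "0 < \<epsilon>"
    and contr: "\<And>N. \<exists>j\<ge>N. ennreal \<epsilon> \<le> (\<Prod>i\<in>{1..B}. p (- int j - int i) 1)"
begin

definition u :: "int \<Rightarrow> real" where "u x = enn2real (Ge S p x 0)"
definition e :: "int \<Rightarrow> int \<Rightarrow> int \<Rightarrow> real" where "e c x w = enn2real (Ee S p c x w)"
definition Mx :: "int \<Rightarrow> real" where "Mx c = Max (u ` W c)"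
definition mn :: "int \<Rightarrow> real" where "mn c = Min (u ` W c)"
definition beta :: "int \<Rightarrow> real" where "beta c = enn2real (\<Prod>i\<in>{1..B}. p (c - int i) 1)"

lemma Ge_fin: "Ge S p x 0 = ennreal (u x)"
proof -
  have "Ge S p x 0 < \<infinity>" using Ge_le_Htot[of x] Hfin by (rule le_less_trans)
  then show ?thesis by (simp add: u_def)
qed

lemma u_nonneg: "0 \<le> u x" by (simp add: u_def)

lemma u0: "1 \<le> u 0"
proof -
  have "Pe S p 0 0 0 \<le> Ge S p 0 0" unfolding Ge_def
    using sum_le_suminf[of "\<lambda>n. Pe S p n 0 0" "{0}"] by simp
  then have "1 \<le> ennreal (u 0)" using Ge_fin[of 0] by simp
  then show ?thesis by (simp add: ennreal_le_1[symmetric] del: ennreal_le_1)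
qed

lemma Ee_le1: "x \<le> c + int B - 1 \<Longrightarrow> w \<in> W c \<Longrightarrow> Ee S p c x w \<le> 1"
  using member_le_sum[of w "W c" "Ee S p c x"] finW mass1[OF sigfin] by simp

lemma Ee_fin: "x \<le> c + int B - 1 \<Longrightarrow> w \<in> W c \<Longrightarrow> Ee S p c x w = ennreal (e c x w)"
proof -
  assume a: "x \<le> c + int B - 1" "w \<in> W c"
  have "Ee S p c x w < top" using Ee_le1[OF a] ennreal_one_less_top by (rule le_less_trans)
  then show ?thesis by (simp add: e_def)
qed

lemma e_nonneg: "0 \<le> e c x w" by (simp add: e_def)

lemma e_sum: "x \<le> c + int B - 1 \<Longrightarrow> (\<Sum>w\<in>W c. e c x w) = 1"
proof -
  assume x: "x \<le> c + int B - 1"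
  have "(\<Sum>w\<in>W c. e c x w) = enn2real (\<Sum>w\<in>W c. Ee S p c x w)"
    unfolding e_def using Ee_le1[OF x] ennreal_one_less_top by (subst enn2real_sum) (auto intro: le_less_trans[of _ 1])
  also have "\<dots> = 1" using mass1[OF sigfin x] by simp
  finally show ?thesis .
qed

lemma u_repr: "c \<le> 0 \<Longrightarrow> x \<le> c + int B - 1 \<Longrightarrow> u x = (\<Sum>w\<in>W c. e c x w * u w)"
proof -
  assume c: "c \<le> 0" and x: "x \<le> c + int B - 1"
  have "ennreal (u x) = (\<Sum>w\<in>W c. ennreal (e c x w) * ennreal (u w))"
    using repr[OF c x] Ee_fin[OF x] by (simp add: Ge_fin)
  also have "\<dots> = (\<Sum>w\<in>W c. ennreal (e c x w * u w))"
    by (intro sum.cong refl) (simp add: ennreal_mult e_nonneg u_nonneg)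
  also have "\<dots> = ennreal (\<Sum>w\<in>W c. e c x w * u w)"
    by (rule sum_ennreal) (simp add: e_nonneg u_nonneg)
  finally show ?thesis by (simp add: u_nonneg sum_nonneg e_nonneg)
qed

lemma W_ne: "c \<in> W c" using Bpos by (simp add: W_def)

lemma Mx_ge: "w \<in> W c \<Longrightarrow> u w \<le> Mx c"
  unfolding Mx_def using finW by (intro Max_ge) auto

lemma mn_le: "w \<in> W c \<Longrightarrow> mn c \<le> u w"
  unfolding mn_def using finW by (intro Min_le) auto

lemma bnd: "c \<le> 0 \<Longrightarrow> x \<le> c + int B - 1 \<Longrightarrow> mn c \<le> u x \<and> u x \<le> Mx c"
proof -
  assume c: "c \<le> 0" and x: "x \<le> c + int B - 1"
  have "u x = (\<Sum>w\<in>W c. e c x w * u w)" by (rule u_repr[OF c x])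
  moreover have "(\<Sum>w\<in>W c. e c x w * u w) \<le> (\<Sum>w\<in>W c. e c x w * Mx c)"
    by (intro sum_mono mult_left_mono Mx_ge e_nonneg)
  moreover have "(\<Sum>w\<in>W c. e c x w * mn c) \<le> (\<Sum>w\<in>W c. e c x w * u w)"
    by (intro sum_mono mult_left_mono mn_le e_nonneg)
  moreover have "(\<Sum>w\<in>W c. e c x w * Mx c) = Mx c" "(\<Sum>w\<in>W c. e c x w * mn c) = mn c"
    using e_sum[OF x] by (simp_all add: sum_distrib_right[symmetric])
  ultimately show ?thesis by simp
qed

lemma Mx_mono: "c' \<le> c \<Longrightarrow> c \<le> 0 \<Longrightarrow> Mx c' \<le> Mx c"
proof -
  assume a: "c' \<le> c" "c \<le> 0"
  obtain w where w: "w \<in> W c'" "Mx c' = u w"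
    unfolding Mx_def using finW W_ne by (metis (no_types, lifting) Max_in empty_iff finite_imageI image_iff)
  then show ?thesis using bnd[of c w] a by (auto simp: W_def)
qed

lemma mn_mono: "c' \<le> c \<Longrightarrow> c \<le> 0 \<Longrightarrow> mn c \<le> mn c'"
proof -
  assume a: "c' \<le> c" "c \<le> 0"
  obtain w where w: "w \<in> W c'" "mn c' = u w"
    unfolding mn_def using finW W_ne by (metis (no_types, lifting) Min_in empty_iff finite_imageI image_iff)
  then show ?thesis using bnd[of c w] a by (auto simp: W_def)
qed


lemma beta_le: "x < c \<Longrightarrow> c - int B \<le> x \<Longrightarrow> beta c \<le> e c x c"
  unfolding beta_def e_def
  by (rule enn2real_mono[OF Ee_lower_B]) (use Ee_le1[of x c c] W_ne ennreal_one_less_top in \<open>auto intro: le_less_trans[of _ 1]\<close>)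

lemma beta_pos: "0 < beta c"
proof -
  have "\<forall>i. p (c - int i) 1 \<noteq> 0" using pos1 by (metis less_irrefl)
  then have "(\<Prod>i\<in>{1..B}. p (c - int i) 1) \<noteq> 0" by simp
  moreover have "(\<Prod>i\<in>{1..B}. p (c - int i) 1) < top" using prod_le_1[of c] ennreal_one_less_top by (rule le_less_trans)
  ultimately show ?thesis unfolding beta_def by (simp add: enn2real_positive_iff zero_less_iff_neq_zero)
qed

lemma contract:
  assumes c: "c \<le> 0" and x: "x \<in> W (c - int B)" and x': "x' \<in> W (c - int B)"
  shows "u x - u x' \<le> (1 - beta c) * (Mx c - mn c)"
proof -
  have xr: "x < c" "c - int B \<le> x" "x' < c" "c - int B \<le> x'" using x x' by (auto simp: W_def)
  have xb: "x \<le> c + int B - 1" "x' \<le> c + int B - 1" using xr Bpos by auto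
  define a where "a = e c x c"
  define a' where "a' = e c x' c"
  define M where "M = Mx c"
  define m where "m = mn c"
  define uc where "uc = u c"
  define b where "b = beta c"
  have fin: "finite (W c)" by (rule finW)
  have split: "(\<Sum>w\<in>W c. f w) = f c + (\<Sum>w\<in>W c - {c}. f w)" for f :: "int \<Rightarrow> real"
    by (rule sum.remove[OF fin W_ne])
  have hx: "u x \<le> a * uc + M - a * M"
  proof -
    have "u x = a * uc + (\<Sum>w\<in>W c - {c}. e c x w * u w)"
      using u_repr[OF c xb(1)] split[of "\<lambda>w. e c x w * u w"] by (simp add: a_def uc_def)
    moreover have "(\<Sum>w\<in>W c - {c}. e c x w * u w) \<le> (\<Sum>w\<in>W c - {c}. e c x w * M)"
      unfolding M_def by (intro sum_mono mult_left_mono Mx_ge e_nonneg) auto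
    moreover have "(\<Sum>w\<in>W c - {c}. e c x w) = 1 - a"
      using e_sum[OF xb(1)] split[of "e c x"] by (simp add: a_def)
    then have "(\<Sum>w\<in>W c - {c}. e c x w * M) = (1 - a) * M" by (simp add: sum_distrib_right[symmetric])
    ultimately have "u x \<le> a * uc + (1 - a) * M" by linarith
    then show ?thesis by (simp add: algebra_simps)
  qed
  have hx': "a' * uc + m - a' * m \<le> u x'"
  proof -
    have "u x' = a' * uc + (\<Sum>w\<in>W c - {c}. e c x' w * u w)"
      using u_repr[OF c xb(2)] split[of "\<lambda>w. e c x' w * u w"] by (simp add: a'_def uc_def)
    moreover have "(\<Sum>w\<in>W c - {c}. e c x' w * m) \<le> (\<Sum>w\<in>W c - {c}. e c x' w * u w)"
      unfolding m_def by (intro sum_mono mult_left_mono mn_le e_nonneg) auto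
    moreover have "(\<Sum>w\<in>W c - {c}. e c x' w) = 1 - a'"
      using e_sum[OF xb(2)] split[of "e c x'"] by (simp add: a'_def)
    then have "(\<Sum>w\<in>W c - {c}. e c x' w * m) = (1 - a') * m" by (simp add: sum_distrib_right[symmetric])
    ultimately have "a' * uc + (1 - a') * m \<le> u x'" by linarith
    then show ?thesis by (simp add: algebra_simps)
  qed
  have ab: "b \<le> a" "b \<le> a'" using beta_le xr by (auto simp: a_def a'_def b_def)
  have ucb: "m \<le> uc" "uc \<le> M" using mn_le[OF W_ne] Mx_ge[OF W_ne] by (auto simp: m_def M_def uc_def)
  have f1: "b * (M - uc) \<le> a * (M - uc)" using ab ucb by (intro mult_right_mono) auto
  have f2: "b * (uc - m) \<le> a' * (uc - m)" using ab ucb by (intro mult_right_mono) auto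
  have "u x - u x' \<le> (1 - b) * (M - m)"
    using hx hx' f1 f2 by (simp add: algebra_simps)
  then show ?thesis by (simp add: M_def m_def b_def)
qed

definition osc :: "int \<Rightarrow> real" where "osc c = Mx c - mn c"

lemma osc_nonneg: "0 \<le> osc c"
  using Mx_ge[OF W_ne[of c]] mn_le[OF W_ne[of c]] by (simp add: osc_def)

lemma osc_mono: "c' \<le> c \<Longrightarrow> c \<le> 0 \<Longrightarrow> osc c' \<le> osc c"
  using Mx_mono mn_mono by (simp add: osc_def diff_mono)

lemma osc_step: "c \<le> 0 \<Longrightarrow> osc (c - int B) \<le> (1 - beta c) * osc c"
proof -
  assume c: "c \<le> 0"
  obtain x where x: "x \<in> W (c - int B)" "Mx (c - int B) = u x"
    unfolding Mx_def using finW W_ne by (metis (no_types, lifting) Max_in empty_iff finite_imageI image_iff)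
  obtain x' where x': "x' \<in> W (c - int B)" "mn (c - int B) = u x'"
    unfolding mn_def using finW W_ne by (metis (no_types, lifting) Min_in empty_iff finite_imageI image_iff)
  show ?thesis using contract[OF c x(1) x'(1)] x x' by (simp add: osc_def)
qed

lemma eps_le1: "\<epsilon> \<le> 1"
proof -
  obtain j where "ennreal \<epsilon> \<le> (\<Prod>i\<in>{1..B}. p (- int j - int i) 1)" using contr[of 0] by auto
  also have "\<dots> \<le> 1" using prod_le_1[of "- int j"] by simp
  finally show ?thesis using epos by simp
qed

lemma osc_iter: "\<exists>c\<le>0. osc c \<le> (1 - \<epsilon>) ^ k * osc 0"
proof (induction k)
  case 0
  then show ?case by auto
next
  case (Suc k)
  then obtain c where c: "c \<le> 0" "osc c \<le> (1 - \<epsilon>) ^ k * osc 0" by auto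
  obtain j where j: "j \<ge> nat (- c)" "ennreal \<epsilon> \<le> (\<Prod>i\<in>{1..B}. p (- int j - int i) 1)"
    using contr by blast
  define c' where "c' = - int j"
  have c'c: "c' \<le> c" using j(1) c by (simp add: c'_def)
  have "\<epsilon> \<le> beta c'"
  proof -
    have "(\<Prod>i\<in>{1..B}. p (- int j - int i) 1) < top"
      using prod_le_1[of "- int j"] ennreal_one_less_top by (rule le_less_trans)
    then have "enn2real (ennreal \<epsilon>) \<le> enn2real (\<Prod>i\<in>{1..B}. p (- int j - int i) 1)"
      by (rule enn2real_mono[OF j(2)])
    then show ?thesis using epos by (simp add: beta_def c'_def)
  qed
  have "osc (c' - int B) \<le> (1 - beta c') * osc c'" by (rule osc_step) (simp add: c'_def)
  also have "\<dots> \<le> (1 - \<epsilon>) * osc c'" using \<open>\<epsilon> \<le> beta c'\<close> osc_nonneg by (intro mult_right_mono) auto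
  also have "\<dots> \<le> (1 - \<epsilon>) * osc c" using osc_mono[OF c'c c(1)] eps_le1 by (intro mult_left_mono) auto
  also have "\<dots> \<le> (1 - \<epsilon>) * ((1 - \<epsilon>) ^ k * osc 0)" using c(2) eps_le1 by (intro mult_left_mono) auto
  finally show ?case by (intro exI[of _ "c' - int B"]) (auto simp: c'_def)
qed

lemma osc_small: "0 < \<eta> \<Longrightarrow> \<exists>c\<le>0. osc c < \<eta>"
proof -
  assume eta: "0 < \<eta>"
  show ?thesis
  proof (cases "osc 0 = 0")
    case True
    then show ?thesis using eta by (intro exI[of _ 0]) auto
  next
    case False
    then have o0: "0 < osc 0" using osc_nonneg[of 0] by simp
    obtain k where k: "(1 - \<epsilon>) ^ k < \<eta> / osc 0"
      using real_arch_pow_inv[of "\<eta> / osc 0" "1 - \<epsilon>"] eta o0 epos by auto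
    obtain c where c: "c \<le> 0" "osc c \<le> (1 - \<epsilon>) ^ k * osc 0" using osc_iter by blast
    have "(1 - \<epsilon>) ^ k * osc 0 < \<eta>" using k o0 by (simp add: pos_less_divide_eq)
    then show ?thesis using c by (intro exI[of _ c]) auto
  qed
qed

lemma u_close: "c \<le> 0 \<Longrightarrow> x < c \<Longrightarrow> y < c \<Longrightarrow> \<bar>u x - u y\<bar> \<le> osc c"
  using bnd[of c x] bnd[of c y] Bpos by (auto simp: osc_def abs_le_iff)

lemma quenched_limit: "\<exists>L>0. ((\<lambda>x. Ge S p x 0) \<longlongrightarrow> ennreal L) at_bot"
proof -
  define s where "s n = u (- int n)" for n
  have "Cauchy s"
  proof (rule metric_CauchyI)
    fix \<eta> :: real assume "0 < \<eta>"
    then obtain c where c: "c \<le> 0" "osc c < \<eta>" using osc_small by blast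
    show "\<exists>M. \<forall>m\<ge>M. \<forall>n\<ge>M. dist (s m) (s n) < \<eta>"
    proof (intro exI[of _ "nat (1 - c)"] allI impI)
      fix m n assume "nat (1 - c) \<le> m" "nat (1 - c) \<le> n"
      then have "- int m < c" "- int n < c" by auto
      then show "dist (s m) (s n) < \<eta>"
        using u_close[OF c(1)] c(2) by (simp add: s_def dist_real_def) (meson le_less_trans)
    qed
  qed
  then obtain L where sL: "s \<longlonglongrightarrow> L" using Cauchy_convergent_iff convergent_def by blast
  have ulim: "(u \<longlongrightarrow> L) at_bot"
  proof (rule tendstoI)
    fix \<eta> :: real assume "0 < \<eta>"
    then obtain c where c: "c \<le> 0" "osc c < \<eta>" using osc_small by blast
    have "dist (u x) L < \<eta>" if x: "x \<le> c - 1" for x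
    proof -
      have "(\<lambda>n. \<bar>u x - s n\<bar>) \<longlonglongrightarrow> \<bar>u x - L\<bar>" by (intro tendsto_intros sL)
      moreover have "\<forall>n\<ge>nat (1 - c). \<bar>u x - s n\<bar> \<le> osc c"
        using u_close[OF c(1)] x by (auto simp: s_def)
      ultimately have "\<bar>u x - L\<bar> \<le> osc c" by (intro LIMSEQ_le_const2) auto
      then show ?thesis using c(2) by (simp add: dist_real_def)
    qed
    then show "\<forall>\<^sub>F x in at_bot. dist (u x) L < \<eta>"
      unfolding eventually_at_bot_linorder by blast
  qed
  have lowb: "beta 0 \<le> u x" if x: "x \<le> -1" for x
  proof -
    have aux: "beta 0 \<le> u y" if y: "y \<in> W (0 - int B)" for y
    proof -
      have yr: "y < 0" "0 - int B \<le> y" using y by (auto simp: W_def)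
      have "u y = (\<Sum>w\<in>W 0. e 0 y w * u w)" using yr Bpos by (intro u_repr) auto
      also have "\<dots> \<ge> e 0 y 0 * u 0"
        using W_ne[of 0] finW by (intro member_le_sum) (auto simp: e_nonneg u_nonneg)
      finally have "e 0 y 0 * u 0 \<le> u y" .
      moreover have "beta 0 \<le> e 0 y 0 * u 0"
        using beta_le[of y 0] yr u0 beta_pos[of 0] e_nonneg[of 0 y 0]
        by (metis mult_le_cancel_left1 order_trans less_le_not_le)
      ultimately show ?thesis by simp
    qed
    show ?thesis
    proof (cases "x < - int B")
      case True
      obtain y where y: "y \<in> W (0 - int B)" "mn (0 - int B) = u y"
        unfolding mn_def using finW W_ne by (metis (no_types, lifting) Min_in empty_iff finite_imageI image_iff)
      have "mn (0 - int B) \<le> u x" using bnd[of "0 - int B" x] True Bpos by auto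
      then show ?thesis using aux[OF y(1)] y(2) by simp
    next
      case False
      then show ?thesis using x by (intro aux) (auto simp: W_def)
    qed
  qed
  have "beta 0 \<le> L"
  proof (rule LIMSEQ_le_const[OF sL])
    show "\<exists>N. \<forall>n\<ge>N. beta 0 \<le> s n" using lowb by (intro exI[of _ 1]) (auto simp: s_def)
  qed
  then have Lpos: "0 < L" using beta_pos[of 0] by simp
  have "((\<lambda>x. ennreal (u x)) \<longlongrightarrow> ennreal L) at_bot" using ulim by (rule tendsto_ennrealI)
  then have "((\<lambda>x. Ge S p x 0) \<longlongrightarrow> ennreal L) at_bot" by (simp add: Ge_fin)
  then show ?thesis using Lpos by blast
qed

end


lemma Pe_shift: "Pe S (\<lambda>x. p (x + a)) n x y = Pe S p n (x + a) (y + a)"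
  by (induction n arbitrary: y) (auto simp: algebra_simps)

lemma Qe_shift: "Qe S (\<lambda>x. p (x + a)) M n x y = Qe S p (M + a) n (x + a) (y + a)"
  by (induction n arbitrary: x) (auto simp: algebra_simps)

lemma Se_shift: "Se S (\<lambda>x. p (x + a)) M n x = Se S p (M + a) n (x + a)"
  by (induction n arbitrary: x) (auto simp: algebra_simps)

lemma Ge_shift: "Ge S (\<lambda>x. p (x + a)) x y = Ge S p (x + a) (y + a)"
  by (simp add: Ge_def Pe_shift)

lemma shift_shift: "shift a (shift b \<omega>) = shift (a + b) \<omega>"
  by (simp add: shift_def fun_eq_iff algebra_simps)

lemma shift_0: "shift 0 \<omega> = \<omega>"
  by (simp add: shift_def)

definition pk :: "(env \<Rightarrow> int \<Rightarrow> real) \<Rightarrow> env \<Rightarrow> int \<Rightarrow> int \<Rightarrow> ennreal" where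
  "pk pih \<omega> x z = ennreal (pih (shift x \<omega>) z)"

lemma pk_shift: "pk pih (shift a \<omega>) = (\<lambda>x. pk pih \<omega> (x + a))"
  by (simp add: pk_def fun_eq_iff shift_shift)

lemma trans_prob_nonneg:
  assumes "\<And>\<omega> z. z \<in> steps B \<Longrightarrow> 0 \<le> pih \<omega> z"
  shows "0 \<le> trans_prob B pih n \<omega> x y"
  by (induction n arbitrary: y) (auto intro!: sum_nonneg mult_nonneg_nonneg assms)

lemma stay_prob_nonneg:
  assumes "\<And>\<omega> z. z \<in> steps B \<Longrightarrow> 0 \<le> pih \<omega> z"
  shows "0 \<le> stay_prob B pih n \<omega> x"
  by (induction n arbitrary: x) (auto intro!: sum_nonneg mult_nonneg_nonneg assms)

lemma trans_prob_Pe: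
  assumes nn: "\<And>\<omega> z. z \<in> steps B \<Longrightarrow> 0 \<le> pih \<omega> z"
  shows "ennreal (trans_prob B pih n \<omega> x y) = Pe (steps B) (pk pih \<omega>) n x y"
proof (induction n arbitrary: y)
  case 0
  then show ?case by simp
next
  case (Suc n)
  have "ennreal (trans_prob B pih (Suc n) \<omega> x y)
      = (\<Sum>z\<in>steps B. ennreal (trans_prob B pih n \<omega> x (y - z) * pih (shift (y - z) \<omega>) z))"
    by (simp add: sum_ennreal trans_prob_nonneg[OF nn] nn)
  also have "\<dots> = Pe (steps B) (pk pih \<omega>) (Suc n) x y"
    by (simp add: ennreal_mult trans_prob_nonneg[OF nn] nn Suc pk_def[symmetric])
  finally show ?case .
qed

lemma stay_prob_Se:
  assumes nn: "\<And>\<omega> z. z \<in> steps B \<Longrightarrow> 0 \<le> pih \<omega> z"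
  shows "ennreal (stay_prob B pih n \<omega> x) = Se (steps B) (pk pih \<omega>) 0 n x"
proof (induction n arbitrary: x)
  case 0
  then show ?case by simp
next
  case (Suc n)
  show ?case
  proof (cases "x \<le> 0")
    case True
    have "ennreal (stay_prob B pih (Suc n) \<omega> x)
      = (\<Sum>z\<in>steps B. ennreal (pih (shift x \<omega>) z * stay_prob B pih n \<omega> (x + z)))"
      using True by (simp add: sum_ennreal stay_prob_nonneg[OF nn] nn)
    also have "\<dots> = Se (steps B) (pk pih \<omega>) 0 (Suc n) x"
      using True by (simp add: ennreal_mult stay_prob_nonneg[OF nn] nn Suc pk_def[symmetric])
    finally show ?thesis .
  qed simp
qed

lemma green_Ge:
  assumes nn: "\<And>\<omega> z. z \<in> steps B \<Longrightarrow> 0 \<le> pih \<omega> z"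
  shows "green B pih \<omega> x = Ge (steps B) (pk pih \<omega>) x 0"
  by (simp add: green_def Ge_def trans_prob_Pe[OF nn])

lemma et1_sig:
  assumes nn: "\<And>\<omega> z. z \<in> steps B \<Longrightarrow> 0 \<le> pih \<omega> z"
  shows "expected_t1 B pih (shift m \<omega>) = sig (steps B) (pk pih \<omega>) m"
  by (simp add: expected_t1_def sig_def stay_prob_Se[OF nn] pk_shift Se_shift)

lemma et1_Se:
  assumes nn: "\<And>\<omega> z. z \<in> steps B \<Longrightarrow> 0 \<le> pih \<omega> z"
  shows "expected_t1 B pih \<omega> = (\<Sum>n. Se (steps B) (pk pih \<omega>) 0 n 0)"
  by (simp add: expected_t1_def stay_prob_Se[OF nn])

definition KK :: "int set \<Rightarrow> (int \<Rightarrow> int \<Rightarrow> ennreal) \<Rightarrow> nat \<Rightarrow> ennreal" where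
  "KK S p j = (\<Sum>n. Qe S p 0 n 0 (- int j))"

lemma Htot_KK: "Htot S (pk pih \<omega>) = (\<Sum>j. KK S (pk pih (shift (int j) \<omega>)) j)"
  by (simp add: Htot_def hh_def hq_def KK_def pk_shift Qe_shift)

lemma Qe_Se_sum: "(\<Sum>j<N. Qe S p 0 n x (- int j)) \<le> Se S p 0 n x"
proof (induction n arbitrary: x)
  case 0
  have "(\<Sum>j<N. Qe S p 0 0 x (- int j)) = (\<Sum>j<N. if j = nat (- x) \<and> x \<le> 0 then 1 else 0)"
    by (intro sum.cong refl) auto
  also have "\<dots> \<le> (if x \<le> 0 then 1 else 0)" by (auto simp: sum.delta)
  finally show ?case by simp
next
  case (Suc n)
  show ?case
  proof (cases "x \<le> 0")
    case True
    have "(\<Sum>j<N. Qe S p 0 (Suc n) x (- int j)) = (\<Sum>z\<in>S. p x z * (\<Sum>j<N. Qe S p 0 n (x + z) (- int j)))"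
      using True by (simp add: sum_distrib_left) (rule sum.swap)
    also have "\<dots> \<le> (\<Sum>z\<in>S. p x z * Se S p 0 n (x + z))"
      by (intro sum_mono mult_left_mono Suc.IH) auto
    finally show ?thesis using True by simp
  qed simp
qed

lemma KK_le: "(\<Sum>j. KK S p j) \<le> (\<Sum>n. Se S p 0 n 0)"
proof (rule suminf_le_const)
  fix N
  have "(\<Sum>j<N. KK S p j) = (\<Sum>n. \<Sum>j<N. Qe S p 0 n 0 (- int j))"
    unfolding KK_def by (rule suminf_sum_ennreal[symmetric])
  also have "\<dots> \<le> (\<Sum>n. Se S p 0 n 0)"
    by (intro suminf_le Qe_Se_sum) auto
  finally show "sum (KK S p) {..<N} \<le> (\<Sum>n. Se S p 0 n 0)" .
qed simp


lemma space_env: "space env_space = UNIV"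
  by (simp add: env_space_def space_PiM)

lemma shift_meas: "shift z \<in> measurable env_space env_space"
proof -
  have "(\<lambda>\<omega> x. \<omega> (x + z)) \<in> measurable env_space env_space"
    unfolding env_space_def
    by (rule measurable_PiM_single') (auto intro: measurable_component_singleton simp: space_PiM)
  then show ?thesis by (simp add: shift_def[abs_def])
qed

lemma Pe_meas:
  assumes "\<And>x z. z \<in> S \<Longrightarrow> (\<lambda>\<omega>. pe \<omega> x z) \<in> borel_measurable M"
  shows "(\<lambda>\<omega>. Pe S (pe \<omega>) n x y) \<in> borel_measurable M"
  by (induction n arbitrary: y) (auto intro!: borel_measurable_sum borel_measurable_times_ennreal assms)

lemma Qe_meas:
  assumes "\<And>x z. z \<in> S \<Longrightarrow> (\<lambda>\<omega>. pe \<omega> x z) \<in> borel_measurable M"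
  shows "(\<lambda>\<omega>. Qe S (pe \<omega>) L n x y) \<in> borel_measurable M"
proof (induction n arbitrary: x)
  case (Suc n)
  then show ?case by (cases "x \<le> L") (auto intro!: borel_measurable_sum borel_measurable_times_ennreal assms)
qed simp

lemma Se_meas:
  assumes "\<And>x z. z \<in> S \<Longrightarrow> (\<lambda>\<omega>. pe \<omega> x z) \<in> borel_measurable M"
  shows "(\<lambda>\<omega>. Se S (pe \<omega>) L n x) \<in> borel_measurable M"
proof (induction n arbitrary: x)
  case (Suc n)
  then show ?case by (cases "x \<le> L") (auto intro!: borel_measurable_sum borel_measurable_times_ennreal assms)
qed simp

lemma Ge_meas:
  assumes "\<And>x z. z \<in> S \<Longrightarrow> (\<lambda>\<omega>. pe \<omega> x z) \<in> borel_measurable M"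
  shows "(\<lambda>\<omega>. Ge S (pe \<omega>) x y) \<in> borel_measurable M"
  unfolding Ge_def by (intro borel_measurable_suminf_order Pe_meas assms)

lemma KK_meas:
  assumes "\<And>x z. z \<in> S \<Longrightarrow> (\<lambda>\<omega>. pe \<omega> x z) \<in> borel_measurable M"
  shows "(\<lambda>\<omega>. KK S (pe \<omega>) j) \<in> borel_measurable M"
  unfolding KK_def by (intro borel_measurable_suminf_order Qe_meas assms)

lemma Htot_meas:
  assumes "\<And>x z. z \<in> S \<Longrightarrow> (\<lambda>\<omega>. pe \<omega> x z) \<in> borel_measurable M"
  shows "(\<lambda>\<omega>. Htot S (pe \<omega>)) \<in> borel_measurable M"
  unfolding Htot_def hh_def hq_def by (intro borel_measurable_suminf_order Qe_meas assms)

locale setting =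
  fixes B :: nat and P :: "env measure" and pih :: "env \<Rightarrow> int \<Rightarrow> real"
  assumes B1: "B \<ge> 1"
    and se: "stationary_ergodic B P"
    and ek: "env_kernel B P pih"
    and pos: "AE \<omega> in P. pih \<omega> 1 > 0"
    and fin: "(\<integral>\<^sup>+ \<omega>. expected_t1 B pih \<omega> \<partial>P) < \<infinity>"
begin

abbreviation "S \<equiv> steps B"

lemma prob: "prob_space P" using se by (simp add: stationary_ergodic_def)
lemma sets_P: "sets P = sets env_space" using se by (simp add: stationary_ergodic_def)
lemma space_P: "space P = UNIV" using sets_eq_imp_space_eq[OF sets_P] space_env by simp
lemma distr_eq: "distr P P (shift z) = P" using se by (simp add: stationary_ergodic_def)
lemma erg: "A \<in> sets P \<Longrightarrow> (\<And>z. shift z -` A = A) \<Longrightarrow> measure P A = 0 \<or> measure P A = 1"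
  using se by (simp add: stationary_ergodic_def)

lemma nn: "z \<in> S \<Longrightarrow> 0 \<le> pih \<omega> z" using ek by (simp add: env_kernel_def)

lemma finS: "finite S"
proof -
  have "S \<subseteq> {- int B..int B}" by (auto simp: steps_def)
  then show ?thesis by (rule finite_subset) simp
qed

lemma one_S: "1 \<in> S" using B1 by (simp add: steps_def)
lemma Sbd: "z \<in> S \<Longrightarrow> z \<le> int B" by (auto simp: steps_def abs_le_iff)

lemma shift_measP: "shift z \<in> measurable P P"
  using shift_meas measurable_cong_sets[OF sets_P sets_P] by blast

lemma nn_shift:
  assumes f: "f \<in> borel_measurable P"
  shows "(\<integral>\<^sup>+ \<omega>. f (shift z \<omega>) \<partial>P) = (\<integral>\<^sup>+ \<omega>. f \<omega> \<partial>P)"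
proof -
  have "f \<in> borel_measurable (distr P P (shift z))" using f by (simp add: distr_eq)
  from nn_integral_distr[OF shift_measP this] show ?thesis by (simp add: distr_eq)
qed

lemma AE_shift: "AE \<omega> in P. Q \<omega> \<Longrightarrow> AE \<omega> in P. Q (shift z \<omega>)"
proof -
  assume "AE \<omega> in P. Q \<omega>"
  then have "AE \<omega> in distr P P (shift z). Q \<omega>" by (subst distr_eq)
  then show ?thesis by (rule AE_distrD[OF shift_measP])
qed

lemma pih_meas: "z \<in> S \<Longrightarrow> (\<lambda>\<omega>. pih \<omega> z) \<in> borel_measurable P"
  using ek by (simp add: env_kernel_def)

lemma pihs_meas: "z \<in> S \<Longrightarrow> (\<lambda>\<omega>. pih (shift x \<omega>) z) \<in> borel_measurable P"
  by (rule measurable_compose[OF shift_measP pih_meas])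

lemma pk_meas: "z \<in> S \<Longrightarrow> (\<lambda>\<omega>. pk pih \<omega> x z) \<in> borel_measurable P"
  unfolding pk_def by (intro measurable_compose[OF pihs_meas measurable_ennreal])

lemma green_meas: "(\<lambda>\<omega>. green B pih \<omega> x) \<in> borel_measurable P"
  by (simp add: green_Ge[OF nn] Ge_meas pk_meas)

lemma et1_meas: "(\<lambda>\<omega>. expected_t1 B pih \<omega>) \<in> borel_measurable P"
proof -
  have eq: "expected_t1 B pih = (\<lambda>\<omega>. \<Sum>n. Se S (pk pih \<omega>) 0 n 0)"
    using et1_Se[OF nn] by (auto simp: fun_eq_iff)
  show ?thesis unfolding eq by (intro borel_measurable_suminf_order Se_meas pk_meas)
qed

lemma Htot_int: "(\<integral>\<^sup>+ \<omega>. Htot S (pk pih \<omega>) \<partial>P) < \<infinity>"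
proof -
  have "(\<integral>\<^sup>+ \<omega>. Htot S (pk pih \<omega>) \<partial>P) = (\<integral>\<^sup>+ \<omega>. (\<Sum>j. KK S (pk pih (shift (int j) \<omega>)) j) \<partial>P)"
    by (simp add: Htot_KK)
  also have "\<dots> = (\<Sum>j. \<integral>\<^sup>+ \<omega>. KK S (pk pih (shift (int j) \<omega>)) j \<partial>P)"
    by (rule nn_integral_suminf) (intro measurable_compose[OF shift_measP] KK_meas pk_meas)
  also have "\<dots> = (\<Sum>j. \<integral>\<^sup>+ \<omega>. KK S (pk pih \<omega>) j \<partial>P)"
    by (subst nn_shift) (auto intro: KK_meas pk_meas)
  also have "\<dots> = (\<integral>\<^sup>+ \<omega>. (\<Sum>j. KK S (pk pih \<omega>) j) \<partial>P)"
    by (rule nn_integral_suminf[symmetric]) (intro KK_meas pk_meas)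
  also have "\<dots> \<le> (\<integral>\<^sup>+ \<omega>. expected_t1 B pih \<omega> \<partial>P)"
    by (intro nn_integral_mono) (simp add: KK_le et1_Se[OF nn])
  finally show ?thesis using fin by (rule le_less_trans)
qed


definition betar :: "env \<Rightarrow> real" where
  "betar \<omega> = (\<Prod>i\<in>{1..B}. pih (shift (- int i) \<omega>) 1)"

lemma betar_meas: "betar \<in> borel_measurable P"
  unfolding betar_def[abs_def] using one_S by (intro borel_measurable_prod pihs_meas) auto

lemma betas_meas: "(\<lambda>\<omega>. betar (shift z \<omega>)) \<in> borel_measurable P"
  by (rule measurable_compose[OF shift_measP betar_meas])

lemma AE_sum1: "AE \<omega> in P. \<forall>x. (\<Sum>z\<in>S. pih (shift x \<omega>) z) = 1"
proof -
  have "AE \<omega> in P. (\<Sum>z\<in>S. pih \<omega> z) = 1" using ek by (simp add: env_kernel_def)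
  then show ?thesis unfolding AE_all_countable by (intro allI AE_shift)
qed

lemma AE_pos1: "AE \<omega> in P. \<forall>x. 0 < pih (shift x \<omega>) 1"
  unfolding AE_all_countable using pos by (intro allI AE_shift)

lemma AE_betapos: "AE \<omega> in P. 0 < betar \<omega>"
  using AE_pos1 by eventually_elim (auto simp: betar_def intro!: prod_pos)

lemma exists_eps: "\<exists>\<epsilon>>0. 0 < measure P {\<omega>. \<epsilon> \<le> betar \<omega>}"
proof (rule ccontr)
  assume "\<not> ?thesis"
  then have z: "measure P {\<omega>. inverse (real (Suc n)) \<le> betar \<omega>} = 0" for n
    by (metis inverse_Suc measure_nonneg order_le_less)
  have mS: "{\<omega>. inverse (real (Suc n)) \<le> betar \<omega>} \<in> sets P" for n
  proof -
    have "betar -` {inverse (real (Suc n))..} \<inter> space P \<in> sets P"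
      by (rule measurable_sets[OF betar_meas]) simp
    then show ?thesis by (simp add: space_P vimage_def)
  qed
  have "AE \<omega> in P. \<omega> \<notin> {\<omega>. inverse (real (Suc n)) \<le> betar \<omega>}" for n
    using prob_space.prob_eq_0[OF prob mS] z by simp
  then have "AE \<omega> in P. \<forall>n. betar \<omega> < inverse (real (Suc n))"
    unfolding AE_all_countable by (auto simp: not_le)
  then have "AE \<omega> in P. False" using AE_betapos
  proof eventually_elim
    case (elim \<omega>)
    then obtain n where "n > 0" "inverse (of_nat n) < betar \<omega>" using ex_inverse_of_nat_less by blast
    then show False using elim(1)[rule_format, of "n - 1"] by simp
  qed
  then show False using prob_space.AE_False[OF prob] by simp
qed

lemma shift_inv_aux:
  fixes g :: "int \<Rightarrow> bool"
  shows "(\<forall>N::nat. \<exists>j\<ge>N. g (z - int j)) \<longleftrightarrow> (\<forall>N::nat. \<exists>j\<ge>N. g (- int j))"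
proof
  assume a: "\<forall>N::nat. \<exists>j\<ge>N. g (z - int j)"
  show "\<forall>N::nat. \<exists>j\<ge>N. g (- int j)"
  proof
    fix N :: nat
    obtain j where j: "j \<ge> N + nat \<bar>z\<bar>" "g (z - int j)" using a by blast
    show "\<exists>j\<ge>N. g (- int j)"
      using j by (intro exI[of _ "nat (int j - z)"]) auto
  qed
next
  assume a: "\<forall>N::nat. \<exists>j\<ge>N. g (- int j)"
  show "\<forall>N::nat. \<exists>j\<ge>N. g (z - int j)"
  proof
    fix N :: nat
    obtain j where j: "j \<ge> N + nat \<bar>z\<bar>" "g (- int j)" using a by blast
    show "\<exists>j\<ge>N. g (z - int j)"
      using j by (intro exI[of _ "nat (int j + z)"]) auto
  qed
qed

lemma AE_recur: "\<exists>\<epsilon>>0. AE \<omega> in P. \<forall>N::nat. \<exists>j\<ge>N. \<epsilon> \<le> betar (shift (- int j) \<omega>)"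
proof -
  obtain \<epsilon> where e: "\<epsilon> > 0" "0 < measure P {\<omega>. \<epsilon> \<le> betar \<omega>}" using exists_eps by blast
  define C where "C j = {\<omega>. \<epsilon> \<le> betar (shift (- int j) \<omega>)}" for j :: nat
  define U where "U N = (\<Union>j\<in>{N..}. C j)" for N
  define A where "A = (\<Inter>N. U N)"
  have Cm: "C j \<in> sets P" for j
  proof -
    have "(\<lambda>\<omega>. betar (shift (- int j) \<omega>)) -` {\<epsilon>..} \<inter> space P \<in> sets P"
      by (rule measurable_sets[OF betas_meas]) simp
    then show ?thesis by (simp add: space_P vimage_def C_def)
  qed
  have Um: "U N \<in> sets P" for N unfolding U_def using Cm by (intro sets.countable_UN'') auto
  have Am: "A \<in> sets P" unfolding A_def using Um by (intro sets.countable_INT'') (auto simp: space_P[symmetric])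
  have C0: "C 0 = {\<omega>. \<epsilon> \<le> betar \<omega>}" by (simp add: C_def shift_0)
  have mC: "measure P (C j) = measure P (C 0)" for j
  proof -
    have "measure (distr P P (shift (- int j))) (C 0) = measure P (shift (- int j) -` C 0 \<inter> space P)"
      by (rule measure_distr[OF shift_measP Cm])
    moreover have "shift (- int j) -` C 0 \<inter> space P = C j" by (auto simp: C_def shift_0 space_P)
    ultimately show ?thesis by (simp add: distr_eq)
  qed
  have dec: "decseq U" unfolding U_def decseq_def by (fastforce intro: order_trans)
  have lim: "(\<lambda>N. measure P (U N)) \<longlonglongrightarrow> measure P A"
    unfolding A_def by (rule finite_measure.finite_Lim_measure_decseq[OF prob_space.axioms(1)[OF prob]]) (use Um dec in auto)
  have "measure P (C 0) \<le> measure P (U N)" for N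
  proof -
    have "measure P (C N) \<le> measure P (U N)"
      using Um by (intro finite_measure.finite_measure_mono[OF prob_space.axioms(1)[OF prob]]) (auto simp: U_def)
    then show ?thesis using mC[of N] by linarith
  qed
  then have "measure P (C 0) \<le> measure P A" by (intro LIMSEQ_le_const[OF lim]) auto
  then have Apos: "0 < measure P A" using e C0 by simp
  have inv: "shift z -` A = A" for z
  proof -
    have "shift z -` A = {\<omega>. \<forall>N::nat. \<exists>j\<ge>N. \<epsilon> \<le> betar (shift (z - int j) \<omega>)}"
      by (simp add: A_def U_def C_def shift_shift vimage_def atLeast_def Bex_def)
    also have "\<dots> = {\<omega>. \<forall>N::nat. \<exists>j\<ge>N. \<epsilon> \<le> betar (shift (- int j) \<omega>)}"
    proof (rule Collect_cong)
      fix \<omega>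
      show "(\<forall>N::nat. \<exists>j\<ge>N. \<epsilon> \<le> betar (shift (z - int j) \<omega>)) = (\<forall>N::nat. \<exists>j\<ge>N. \<epsilon> \<le> betar (shift (- int j) \<omega>))"
        by (rule shift_inv_aux[of "\<lambda>k. \<epsilon> \<le> betar (shift k \<omega>)"])
    qed
    also have "\<dots> = A" by (auto simp: A_def U_def C_def)
    finally show ?thesis .
  qed
  have "measure P A = 1" using erg[OF Am inv] Apos by auto
  then have "AE \<omega> in P. \<omega> \<in> A" using prob_space.AE_in_set_eq_1[OF prob] Am by simp
  then have "AE \<omega> in P. \<forall>N::nat. \<exists>j\<ge>N. \<epsilon> \<le> betar (shift (- int j) \<omega>)"
    by eventually_elim (auto simp: A_def U_def C_def)
  then show ?thesis using e by blast
qed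


definition good0 :: "real \<Rightarrow> env \<Rightarrow> bool" where
  "good0 \<epsilon> \<omega> \<longleftrightarrow> (\<forall>x. (\<Sum>z\<in>S. pih (shift x \<omega>) z) = 1) \<and> (\<forall>x. 0 < pih (shift x \<omega>) 1)
     \<and> (\<forall>m. expected_t1 B pih (shift m \<omega>) < \<infinity>) \<and> Htot S (pk pih \<omega>) < \<infinity>
     \<and> (\<forall>N::nat. \<exists>j\<ge>N. \<epsilon> \<le> betar (shift (- int j) \<omega>))"

lemma AE_good: "\<exists>\<epsilon>>0. AE \<omega> in P. \<forall>a. good0 \<epsilon> (shift a \<omega>)"
proof -
  obtain \<epsilon> where e: "\<epsilon> > 0" "AE \<omega> in P. \<forall>N::nat. \<exists>j\<ge>N. \<epsilon> \<le> betar (shift (- int j) \<omega>)"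
    using AE_recur by blast
  have "AE \<omega> in P. expected_t1 B pih \<omega> \<noteq> \<infinity>"
    using nn_integral_noteq_infinite[OF et1_meas] fin by auto
  then have "AE \<omega> in P. expected_t1 B pih \<omega> < \<infinity>" by (simp add: less_top)
  then have ae1: "AE \<omega> in P. \<forall>m. expected_t1 B pih (shift m \<omega>) < \<infinity>"
    unfolding AE_all_countable by (intro allI AE_shift)
  have ae2: "AE \<omega> in P. Htot S (pk pih \<omega>) < \<infinity>"
    using nn_integral_noteq_infinite[OF Htot_meas[OF pk_meas] ] Htot_int by (auto simp: less_top)
  have "AE \<omega> in P. good0 \<epsilon> \<omega>"
    using AE_sum1 AE_pos1 ae1 ae2 e(2) by eventually_elim (simp add: good0_def)
  then have "AE \<omega> in P. \<forall>a. good0 \<epsilon> (shift a \<omega>)"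
    unfolding AE_all_countable by (intro allI AE_shift)
  then show ?thesis using e(1) by blast
qed

lemma kern_pk: "good0 \<epsilon> \<omega> \<Longrightarrow> kern S (pk pih \<omega>)"
proof unfold_locales
  show "finite S" by (rule finS)
  fix x assume g: "good0 \<epsilon> \<omega>"
  have "(\<Sum>z\<in>S. pk pih \<omega> x z) = ennreal (\<Sum>z\<in>S. pih (shift x \<omega>) z)"
    unfolding pk_def by (rule sum_ennreal) (rule nn)
  then show "(\<Sum>z\<in>S. pk pih \<omega> x z) = 1" using g by (simp add: good0_def)
qed

lemma green_eq: "green B pih \<omega> = (\<lambda>x. Ge S (pk pih \<omega>) x 0)"
  by (simp add: fun_eq_iff green_Ge[OF nn])

lemma quenched:
  assumes g: "good0 \<epsilon> \<omega>" and e: "0 < \<epsilon>"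
  shows "\<exists>L>0. (green B pih \<omega> \<longlongrightarrow> ennreal L) at_bot \<and> ennreal L \<le> Htot S (pk pih \<omega>)"
proof -
  interpret kern S "pk pih \<omega>" by (rule kern_pk[OF g])
  have kg: "kernG S (pk pih \<omega>) B \<epsilon>"
  proof (unfold_locales)
    show "\<And>z. z \<in> S \<Longrightarrow> z \<le> int B" by (rule Sbd)
    show "1 \<in> S" by (rule one_S)
    show "1 \<le> B" by (rule B1)
    show "0 < pk pih \<omega> x 1" for x using g by (simp add: good0_def pk_def)
    show "sig S (pk pih \<omega>) m < \<infinity>" for m using g by (simp add: good0_def et1_sig[OF nn, symmetric])
    show "Htot S (pk pih \<omega>) < \<infinity>" using g by (simp add: good0_def)
    show "0 < \<epsilon>" by (rule e)
    show "\<exists>j\<ge>N. ennreal \<epsilon> \<le> (\<Prod>i = 1..B. pk pih \<omega> (- int j - int i) 1)" for N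
    proof -
      obtain j where j: "j \<ge> N" "\<epsilon> \<le> betar (shift (- int j) \<omega>)" using g unfolding good0_def by blast
      have sh: "shift (- int i) (shift (- int j) \<omega>) = shift (- int j - int i) \<omega>" for i
      proof -
        have "- int i + - int j = - int j - int i" by simp
        then show ?thesis by (simp only: shift_shift)
      qed
      have "(\<Prod>i = 1..B. pk pih \<omega> (- int j - int i) 1) = ennreal (betar (shift (- int j) \<omega>))"
        unfolding pk_def betar_def sh
        by (subst prod_ennreal) (auto intro!: nn one_S)
      then show ?thesis using j by (auto intro!: exI[of _ j] ennreal_leI)
    qed
  qed
  obtain L where L: "L > 0" "((\<lambda>x. Ge S (pk pih \<omega>) x 0) \<longlongrightarrow> ennreal L) at_bot"
    using kernG.quenched_limit[OF kg] by blast
  have "ennreal L \<le> Htot S (pk pih \<omega>)"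
    by (rule tendsto_upperbound[OF L(2)]) (auto intro!: always_eventually Ge_le_Htot)
  then show ?thesis using L by (auto simp: green_eq)
qed

definition phi :: "env \<Rightarrow> real" where
  "phi \<omega> = enn2real (liminf (\<lambda>n. green B pih \<omega> (- int n)))"

lemma phi_meas: "phi \<in> borel_measurable P"
  unfolding phi_def[abs_def] by (intro borel_measurable_enn2real borel_measurable_liminf green_meas)

lemma seq_at_bot: "filterlim (\<lambda>n::nat. - int n) at_bot sequentially"
proof (subst filterlim_at_bot, intro allI)
  fix Z :: int
  show "eventually (\<lambda>n. - int n \<le> Z) sequentially"
    unfolding eventually_sequentially by (intro exI[of _ "nat (- Z)"]) auto
qed

lemma phi_good:
  assumes g: "good0 \<epsilon> \<omega>" and e: "0 < \<epsilon>"
  shows "(green B pih \<omega> \<longlongrightarrow> ennreal (phi \<omega>)) at_bot \<and> 0 < phi \<omega> \<and> ennreal (phi \<omega>) \<le> Htot S (pk pih \<omega>)"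
proof -
  obtain L where L: "L > 0" "(green B pih \<omega> \<longlongrightarrow> ennreal L) at_bot" "ennreal L \<le> Htot S (pk pih \<omega>)"
    using quenched[OF g e] by blast
  have "(\<lambda>n. green B pih \<omega> (- int n)) \<longlonglongrightarrow> ennreal L"
    by (rule filterlim_compose[OF L(2) seq_at_bot])
  then have "liminf (\<lambda>n. green B pih \<omega> (- int n)) = ennreal L"
    by (intro lim_imp_Liminf) auto
  then have "phi \<omega> = L" using L(1) by (simp add: phi_def)
  then show ?thesis using L by simp
qed

lemma phi_integrable: "integrable P phi"
proof -
  obtain \<epsilon> where e: "\<epsilon> > 0" "AE \<omega> in P. \<forall>a. good0 \<epsilon> (shift a \<omega>)" using AE_good by blast
  have "(\<integral>\<^sup>+ \<omega>. ennreal (phi \<omega>) \<partial>P) \<le> (\<integral>\<^sup>+ \<omega>. Htot S (pk pih \<omega>) \<partial>P)"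
  proof (rule nn_integral_mono_AE)
    show "AE \<omega> in P. ennreal (phi \<omega>) \<le> Htot S (pk pih \<omega>)"
      using e(2)
    proof eventually_elim
      case (elim \<omega>)
      then have "good0 \<epsilon> (shift 0 \<omega>)" by blast
      then have "good0 \<epsilon> \<omega>" by (simp only: shift_0)
      then show ?case using phi_good[OF _ e(1)] by blast
    qed
  qed
  also have "\<dots> < \<infinity>" by (rule Htot_int)
  finally show ?thesis by (intro integrableI_nonneg phi_meas) (auto simp: phi_def)
qed


lemma phi_nonneg: "0 \<le> phi \<omega>" by (simp add: phi_def)

lemma phi_inv:
  assumes g: "\<forall>a. good0 \<epsilon> (shift a \<omega>)" and e: "0 < \<epsilon>"
  shows "(\<Sum>z\<in>S. phi (shift (- z) \<omega>) * pih (shift (- z) \<omega>) z) = phi \<omega>"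
proof -
  have "good0 \<epsilon> (shift 0 \<omega>)" using g by blast
  then have g0: "good0 \<epsilon> \<omega>" by (simp only: shift_0)
  interpret kern S "pk pih \<omega>" by (rule kern_pk[OF g0])
  define c where "c z = ennreal (pih (shift (- z) \<omega>) z)" for z
  have lim0: "(green B pih \<omega> \<longlongrightarrow> ennreal (phi \<omega>)) at_bot" using phi_good[OF g0 e] by blast
  have limz: "((\<lambda>x. green B pih (shift (- z) \<omega>) (x + z)) \<longlongrightarrow> ennreal (phi (shift (- z) \<omega>))) at_bot" for z
  proof -
    have "(green B pih (shift (- z) \<omega>) \<longlongrightarrow> ennreal (phi (shift (- z) \<omega>))) at_bot"
      using phi_good[OF g[rule_format, of "- z"] e] by blast
    moreover have "filterlim (\<lambda>x::int. x + z) at_bot at_bot"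
    proof (subst filterlim_at_bot, intro allI)
      fix Z :: int
      show "eventually (\<lambda>x. x + z \<le> Z) at_bot"
        unfolding eventually_at_bot_linorder by (intro exI[of _ "Z - z"]) auto
    qed
    ultimately show ?thesis by (rule filterlim_compose)
  qed
  have eqn: "green B pih \<omega> x = (\<Sum>z\<in>S. c z * green B pih (shift (- z) \<omega>) (x + z))" if x: "x \<noteq> 0" for x
  proof -
    have "green B pih \<omega> x = (\<Sum>z\<in>S. Ge S (pk pih \<omega>) x (0 - z) * pk pih \<omega> (0 - z) z)"
      using Ge_last[of x 0] x by (simp add: green_eq)
    also have "\<dots> = (\<Sum>z\<in>S. c z * green B pih (shift (- z) \<omega>) (x + z))"
    proof (rule sum.cong[OF refl])
      fix z
      have "green B pih (shift (- z) \<omega>) (x + z) = Ge S (\<lambda>y. pk pih \<omega> (y + - z)) (x + z) 0"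
        by (simp add: green_eq pk_shift)
      also have "\<dots> = Ge S (pk pih \<omega>) x (0 - z)" using Ge_shift[of S "pk pih \<omega>" "- z" "x + z" 0] by simp
      finally show "Ge S (pk pih \<omega>) x (0 - z) * pk pih \<omega> (0 - z) z = c z * green B pih (shift (- z) \<omega>) (x + z)"
        by (simp add: c_def pk_def mult.commute)
    qed
    finally show ?thesis .
  qed
  have limR: "((\<lambda>x. \<Sum>z\<in>S. c z * green B pih (shift (- z) \<omega>) (x + z)) \<longlongrightarrow> (\<Sum>z\<in>S. c z * ennreal (phi (shift (- z) \<omega>)))) at_bot"
    by (intro tendsto_sum ennreal_tendsto_cmult limz) (simp add: c_def)
  have ev: "eventually (\<lambda>x. (\<Sum>z\<in>S. c z * green B pih (shift (- z) \<omega>) (x + z)) = green B pih \<omega> x) at_bot"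
    unfolding eventually_at_bot_linorder by (intro exI[of _ "-1"]) (auto simp: eqn)
  have "(green B pih \<omega> \<longlongrightarrow> (\<Sum>z\<in>S. c z * ennreal (phi (shift (- z) \<omega>)))) at_bot"
    using tendsto_cong[OF ev] limR by blast
  then have "ennreal (phi \<omega>) = (\<Sum>z\<in>S. c z * ennreal (phi (shift (- z) \<omega>)))"
    using lim0 by (intro tendsto_unique[of at_bot]) auto
  also have "\<dots> = (\<Sum>z\<in>S. ennreal (phi (shift (- z) \<omega>) * pih (shift (- z) \<omega>) z))"
    by (intro sum.cong refl) (simp add: c_def ennreal_mult nn phi_nonneg mult.commute)
  also have "\<dots> = ennreal (\<Sum>z\<in>S. phi (shift (- z) \<omega>) * pih (shift (- z) \<omega>) z)"
    by (rule sum_ennreal) (simp add: nn phi_nonneg)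
  finally show ?thesis
    by (subst (asm) ennreal_inj) (auto intro!: sum_nonneg simp: nn phi_nonneg phi_def)
qed

end

theorem theorem1p9:
  fixes B :: nat and P :: "env measure" and pih :: "env \<Rightarrow> int \<Rightarrow> real"
  assumes "B \<ge> 1"
    and "stationary_ergodic B P"
    and "env_kernel B P pih"
    and "AE \<omega> in P. pih \<omega> 1 > 0"
    and "(\<integral>\<^sup>+ \<omega>. expected_t1 B pih \<omega> \<partial>P) < \<infinity>"
  shows "\<exists>\<phi> :: env \<Rightarrow> real.
           (AE \<omega> in P. (green B pih \<omega> \<longlongrightarrow> ennreal (\<phi> \<omega>)) at_bot \<and> \<phi> \<omega> > 0)
         \<and> integrable P \<phi>
         \<and> (AE \<omega> in P. (\<Sum>z\<in>steps B. \<phi> (shift (- z) \<omega>) * pih (shift (- z) \<omega>) z) = \<phi> \<omega>)"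
proof -
  interpret setting B P pih using assms by unfold_locales
  obtain \<epsilon> where e: "\<epsilon> > 0" "AE \<omega> in P. \<forall>a. good0 \<epsilon> (shift a \<omega>)" using AE_good by blast
  have A: "AE \<omega> in P. (green B pih \<omega> \<longlongrightarrow> ennreal (phi \<omega>)) at_bot \<and> phi \<omega> > 0"
    using e(2)
  proof eventually_elim
    case (elim \<omega>)
    then have "good0 \<epsilon> (shift 0 \<omega>)" by blast
    then have "good0 \<epsilon> \<omega>" by (simp only: shift_0)
    then show ?case using phi_good[OF _ e(1)] by blast
  qed
  have C: "AE \<omega> in P. (\<Sum>z\<in>steps B. phi (shift (- z) \<omega>) * pih (shift (- z) \<omega>) z) = phi \<omega>"
    using e(2) by eventually_elim (rule phi_inv[OF _ e(1)])
  show ?thesis using A C phi_integrable by blast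
qed

end
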